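(* Let $P\subset\mathbb R^d$ ($d\ge2$) be a $d$-polytope in general position with facets $F_1,\dots,F_k$, and let $H$ be the hyperplane spanned by $F_k$. For $1\le i\le k$ put $F_i'=\pi^{-1}(\pi(F_i))\cap H$ and $Q_i=\mathrm{conv}(F_i\cup F_i')$. Then for every $x\in\mathbb R^d$, $$\mathbf 1_{\Omega(P)}(x)=-\operatorname{sign}(F_k)\sum_{i=1}^{k-1}\operatorname{sign}(F_i)\,\mathbf 1_{\rho^+(\Omega(\pi(F_i)),Q_i)}(x).$$
   Context: $\pi:\mathbb R^k\to\mathbb R^{k-1}$ forgets the last coordinate and $\pi^{(j)}$ forgets the last $j$ coordinates. For a compact $S\subset\mathbb R^k$ and $y\in\pi(S)$, $n(y,S)$, $p(y,S)$ are the points of $S\cap\pi^{-1}(y)$ with smallest and largest last coordinate; $NB(S)=\{n(y,S)\}$, $PB(S)=\{p(y,S)\}$ over $y\in\pi(S)$, and $\Omega(S)=S\setminus NB(S)$. For $y\in\mathbb R^{d-1}$, $\rho^+(y,Q)=(Q\cap\pi^{-1}(y))\setminus\{n(y,Q)\}$ (empty if $y\notin\pi(Q)$), and for $T\subset\mathbb R^{d-1}$, $\rho^+(T,Q)=\bigcup_{y\in T}\rho^+(y,Q)$. A $d$-polytope with vertex set $V$ is in general position if for every $0\le k\le d-1$ and every $(k+1)$-subset $U\subset V$, $\pi^{(d-k)}(\mathrm{conv}(U))$ is a $k$-simplex. A facet $F$ of $P$ is positive, $\operatorname{sign}(F)=+1$, if some relative interior point of $F$ lies in $PB(P)$, and negative,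 $\operatorname{sign}(F)=-1$, if some relative interior point of $F$ lies in $NB(P)$; for $P$ in general position each facet is exactly one of these. $\mathbf 1_A$ is the indicator function of $A$. *)

theory Defs
  imports "HOL-Analysis.Analysis"
begin

text \<open>We work in the ambient space R^d = real^('n::{finite,linorder}) with d = CARD('n),
  where the coordinates are ordered by the linear order of the finite index type 'n.
  The coordinate i is the (rank i + 1)-st coordinate. The space R^k (k \<le> d) is
  identified with the subspace of vectors whose coordinates of rank \<ge> k vanish,
  so forgetting coordinates is modelled by setting them to zero.\<close>

definition rank :: "'n::{finite,linorder} \<Rightarrow> nat" where
  "rank i = card {j. j < i}"

definition coord_ix :: "nat \<Rightarrow> 'n::{finite,linorder}" where
  "coord_ix k = (THE i. rank i = k - 1)"

definition lastc :: "nat \<Rightarrow> real^('n::{finite,linorder}) \<Rightarrow> real" where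
  "lastc k x = x $ coord_ix k"

definition projj :: "nat \<Rightarrow> nat \<Rightarrow> real^('n::{finite,linorder}) \<Rightarrow> real^('n::{finite,linorder})" where
  "projj k j x = (\<chi> i. if rank i < k - j then x $ i else 0)"

definition proj :: "nat \<Rightarrow> real^('n::{finite,linorder}) \<Rightarrow> real^('n::{finite,linorder})" where
  "proj k = projj k 1"

definition nb :: "nat \<Rightarrow> (real^('n::{finite,linorder})) set \<Rightarrow> real^('n::{finite,linorder}) \<Rightarrow> real^('n::{finite,linorder})" where
  "nb k S y = (THE p. p \<in> S \<and> proj k p = y \<and>
      (\<forall>q\<in>S. proj k q = y \<longrightarrow> lastc k p \<le> lastc k q))"

definition pb :: "nat \<Rightarrow> (real^('n::{finite,linorder})) set \<Rightarrow> real^('n::{finite,linorder}) \<Rightarrow> real^('n::{finite,linorder})" where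
  "pb k S y = (THE p. p \<in> S \<and> proj k p = y \<and>
      (\<forall>q\<in>S. proj k q = y \<longrightarrow> lastc k q \<le> lastc k p))"

definition NB :: "nat \<Rightarrow> (real^('n::{finite,linorder})) set \<Rightarrow> (real^('n::{finite,linorder})) set" where
  "NB k S = (\<lambda>y. nb k S y) ` (proj k ` S)"

definition PB :: "nat \<Rightarrow> (real^('n::{finite,linorder})) set \<Rightarrow> (real^('n::{finite,linorder})) set" where
  "PB k S = (\<lambda>y. pb k S y) ` (proj k ` S)"

definition Omega :: "nat \<Rightarrow> (real^('n::{finite,linorder})) set \<Rightarrow> (real^('n::{finite,linorder})) set" where
  "Omega k S = S - NB k S"

definition rho_plus :: "nat \<Rightarrow> real^('n::{finite,linorder}) \<Rightarrow> (real^('n::{finite,linorder})) set \<Rightarrow> (real^('n::{finite,linorder})) set" where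
  "rho_plus k y Q = (if y \<in> proj k ` Q then {x \<in> Q. proj k x = y} - {nb k Q y} else {})"

definition rho_plus_set :: "nat \<Rightarrow> (real^('n::{finite,linorder})) set \<Rightarrow> (real^('n::{finite,linorder})) set \<Rightarrow> (real^('n::{finite,linorder})) set" where
  "rho_plus_set k T Q = (\<Union>y\<in>T. rho_plus k y Q)"

definition general_position :: "(real^('n::{finite,linorder})) set \<Rightarrow> bool" where
  "general_position P \<longleftrightarrow>
     polytope P \<and> aff_dim P = int CARD('n) \<and>
     (\<forall>k < CARD('n). \<forall>U. U \<subseteq> {v. v extreme_point_of P} \<and> card U = k + 1 \<longrightarrow>
        (int k) simplex (projj CARD('n) (CARD('n) - k) ` (convex hull U)))"

definition facet_sign :: "(real^('n::{finite,linorder})) set \<Rightarrow> (real^('n::{finite,linorder})) set \<Rightarrow> real" where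
  "facet_sign P F =
     (if \<exists>x \<in> rel_interior F. x \<in> PB CARD('n) P then 1
      else if \<exists>x \<in> rel_interior F. x \<in> NB CARD('n) P then -1 else 0)"

end

theory Submission
  imports Defs
begin


lemma rank_less: "rank (i::'n::{finite,linorder}) < CARD('n)"
proof -
  have "{j. j < i} \<subset> (UNIV::'n set)" by auto
  then show ?thesis unfolding rank_def by (simp add: psubset_card_mono)
qed

lemma rank_mono: "(i::'n::{finite,linorder}) < j \<Longrightarrow> rank i < rank j"
proof -
  assume "i < j"
  then have "{k. k < i} \<subset> {k. k < j}" by auto
  then show ?thesis unfolding rank_def by (simp add: psubset_card_mono)
qed

lemma rank_inj: "rank (i::'n::{finite,linorder}) = rank j \<longleftrightarrow> i = j"
  by (metis less_irrefl linorder_neqE rank_mono)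

lemma rank_surj: "m < CARD('n) \<Longrightarrow> \<exists>i::'n::{finite,linorder}. rank i = m"
proof -
  assume m: "m < CARD('n)"
  have inj: "inj (rank :: 'n \<Rightarrow> nat)" by (simp add: inj_def rank_inj)
  have sub: "range (rank :: 'n \<Rightarrow> nat) \<subseteq> {..<CARD('n)}" using rank_less by auto
  have "card (range (rank :: 'n \<Rightarrow> nat)) = CARD('n)" using inj by (simp add: card_image)
  then have "range (rank :: 'n \<Rightarrow> nat) = {..<CARD('n)}"
    using sub by (simp add: card_subset_eq)
  then show ?thesis using m by (metis imageE lessThan_iff)
qed

lemma coord_ix_rank: "1 \<le> k \<Longrightarrow> k \<le> CARD('n) \<Longrightarrow> rank (coord_ix k :: 'n::{finite,linorder}) = k - 1"
proof -
  assume "1 \<le> k" "k \<le> CARD('n)"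
  then have "\<exists>i::'n. rank i = k - 1" by (intro rank_surj) simp
  then obtain i :: 'n where i: "rank i = k - 1" by blast
  then have "\<exists>!i::'n. rank i = k - 1" using rank_inj by metis
  then show ?thesis unfolding coord_ix_def by (rule theI')
qed

lemma coord_ix_eq: "1 \<le> k \<Longrightarrow> k \<le> CARD('n) \<Longrightarrow> rank (i::'n::{finite,linorder}) = k - 1 \<Longrightarrow> i = coord_ix k"
  by (metis coord_ix_rank rank_inj)

definition coordok :: "nat \<Rightarrow> (real^('n::{finite,linorder})) set \<Rightarrow> bool" where
  "coordok k S \<longleftrightarrow> (\<forall>w\<in>S. \<forall>i. k \<le> rank i \<longrightarrow> w $ i = 0)"

lemma proj_nth: "proj k x $ i = (if rank i < k - 1 then x $ i else 0)"
  by (simp add: proj_def projj_def)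

lemma projj_nth: "projj k j x $ i = (if rank i < k - j then x $ i else 0)"
  by (simp add: projj_def)

lemma linear_projj: "linear (projj k j)"
  by (rule linearI) (auto simp: vec_eq_iff projj_def)

lemma linear_proj: "linear (proj k)"
  unfolding proj_def by (rule linear_projj)

lemma continuous_on_proj: "continuous_on S (proj k :: real^('n::{finite,linorder}) \<Rightarrow> _)"
  using linear_proj linear_continuous_on linear_conv_bounded_linear by blast

lemma continuous_on_lastc: "continuous_on S (lastc k :: real^('n::{finite,linorder}) \<Rightarrow> real)"
  unfolding lastc_def by (intro continuous_intros)

lemma vec_eq_from_proj:
  fixes u v :: "real^('n::{finite,linorder})"
  assumes "1 \<le> k" "k \<le> CARD('n)" "\<forall>i. k \<le> rank i \<longrightarrow> u$i = 0" "\<forall>i. k \<le> rank i \<longrightarrow> v$i = 0"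
    "proj k u = proj k v" "lastc k u = lastc k v"
  shows "u = v"
proof (subst vec_eq_iff, intro allI)
  fix i :: 'n
  consider "rank i < k - 1" | "rank i = k - 1" | "k \<le> rank i" by linarith
  then show "u $ i = v $ i"
  proof cases
    case 1 then show ?thesis using assms(5) by (metis proj_nth)
  next
    case 2 then have "i = coord_ix k" using coord_ix_eq assms by blast
    then show ?thesis using assms(6) by (simp add: lastc_def)
  next
    case 3 then show ?thesis using assms(3,4) by simp
  qed
qed

lemma nb_eq:
  fixes S :: "(real^('n::{finite,linorder})) set"
  assumes "1 \<le> k" "k \<le> CARD('n)" "coordok k S" "q \<in> S" "proj k q = y"
    "\<forall>w\<in>S. proj k w = y \<longrightarrow> lastc k q \<le> lastc k w"
  shows "nb k S y = q"
  unfolding nb_def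
proof (rule the_equality)
  show "q \<in> S \<and> proj k q = y \<and> (\<forall>w\<in>S. proj k w = y \<longrightarrow> lastc k q \<le> lastc k w)" using assms by blast
  fix p assume p: "p \<in> S \<and> proj k p = y \<and> (\<forall>qa\<in>S. proj k qa = y \<longrightarrow> lastc k p \<le> lastc k qa)"
  then have "lastc k p = lastc k q" using assms by force
  then show "p = q" using vec_eq_from_proj[of k p q] assms p unfolding coordok_def by auto
qed

lemma pb_eq:
  fixes S :: "(real^('n::{finite,linorder})) set"
  assumes "1 \<le> k" "k \<le> CARD('n)" "coordok k S" "q \<in> S" "proj k q = y"
    "\<forall>w\<in>S. proj k w = y \<longrightarrow> lastc k w \<le> lastc k q"
  shows "pb k S y = q"
  unfolding pb_def
proof (rule the_equality)
  show "q \<in> S \<and> proj k q = y \<and> (\<forall>w\<in>S. proj k w = y \<longrightarrow> lastc k w \<le> lastc k q)" using assms by blast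
  fix p assume p: "p \<in> S \<and> proj k p = y \<and> (\<forall>qa\<in>S. proj k qa = y \<longrightarrow> lastc k qa \<le> lastc k p)"
  then have "lastc k p = lastc k q" using assms by force
  then show "p = q" using vec_eq_from_proj[of k p q] assms p unfolding coordok_def by auto
qed

lemma fiber_compact:
  fixes S :: "(real^('n::{finite,linorder})) set"
  assumes "compact S"
  shows "compact (S \<inter> proj k -` {y})"
proof -
  have "closed (proj k -` {y} :: (real^('n::{finite,linorder})) set)"
    using continuous_closed_vimage[of "{y}" "proj k"] continuous_on_proj[of UNIV k]
    by (simp add: continuous_on_eq_continuous_at) blast
  then show ?thesis using assms compact_Int_closed by blast
qed

lemma fiber_min:
  fixes S :: "(real^('n::{finite,linorder})) set"
  assumes "compact S" "y \<in> proj k ` S"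
  shows "\<exists>q\<in>S. proj k q = y \<and> (\<forall>w\<in>S. proj k w = y \<longrightarrow> lastc k q \<le> lastc k w)"
proof -
  have "S \<inter> proj k -` {y} \<noteq> {}" using assms by auto
  then obtain q where "q \<in> S \<inter> proj k -` {y}" "\<forall>w\<in>S \<inter> proj k -` {y}. lastc k q \<le> lastc k w"
    using continuous_attains_inf[OF fiber_compact[OF assms(1)] _ continuous_on_lastc] by blast
  then show ?thesis by auto
qed

lemma fiber_max:
  fixes S :: "(real^('n::{finite,linorder})) set"
  assumes "compact S" "y \<in> proj k ` S"
  shows "\<exists>q\<in>S. proj k q = y \<and> (\<forall>w\<in>S. proj k w = y \<longrightarrow> lastc k w \<le> lastc k q)"
proof -
  have "S \<inter> proj k -` {y} \<noteq> {}" using assms by auto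
  then obtain q where "q \<in> S \<inter> proj k -` {y}" "\<forall>w\<in>S \<inter> proj k -` {y}. lastc k w \<le> lastc k q"
    using continuous_attains_sup[OF fiber_compact[OF assms(1)] _ continuous_on_lastc] by blast
  then show ?thesis by auto
qed

lemma NB_iff:
  fixes S :: "(real^('n::{finite,linorder})) set"
  assumes "1 \<le> k" "k \<le> CARD('n)" "coordok k S" "compact S" "x \<in> S"
  shows "x \<in> NB k S \<longleftrightarrow> (\<forall>w\<in>S. proj k w = proj k x \<longrightarrow> lastc k x \<le> lastc k w)"
proof
  assume "x \<in> NB k S"
  then obtain y where y: "y \<in> proj k ` S" "x = nb k S y" unfolding NB_def by auto
  obtain q where q: "q\<in>S" "proj k q = y" "\<forall>w\<in>S. proj k w = y \<longrightarrow> lastc k q \<le> lastc k w"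
    using fiber_min[OF assms(4) y(1)] by blast
  have "x = q" using y(2) nb_eq[OF assms(1-3) q] by simp
  then show "\<forall>w\<in>S. proj k w = proj k x \<longrightarrow> lastc k x \<le> lastc k w" using q by simp
next
  assume "\<forall>w\<in>S. proj k w = proj k x \<longrightarrow> lastc k x \<le> lastc k w"
  then have "nb k S (proj k x) = x" using nb_eq[OF assms(1-3) assms(5)] by simp
  then show "x \<in> NB k S" unfolding NB_def using assms(5) by (metis image_eqI)
qed

lemma PB_iff:
  fixes S :: "(real^('n::{finite,linorder})) set"
  assumes "1 \<le> k" "k \<le> CARD('n)" "coordok k S" "compact S" "x \<in> S"
  shows "x \<in> PB k S \<longleftrightarrow> (\<forall>w\<in>S. proj k w = proj k x \<longrightarrow> lastc k w \<le> lastc k x)"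
proof
  assume "x \<in> PB k S"
  then obtain y where y: "y \<in> proj k ` S" "x = pb k S y" unfolding PB_def by auto
  obtain q where q: "q\<in>S" "proj k q = y" "\<forall>w\<in>S. proj k w = y \<longrightarrow> lastc k w \<le> lastc k q"
    using fiber_max[OF assms(4) y(1)] by blast
  have "x = q" using y(2) pb_eq[OF assms(1-3) q] by simp
  then show "\<forall>w\<in>S. proj k w = proj k x \<longrightarrow> lastc k w \<le> lastc k x" using q by simp
next
  assume "\<forall>w\<in>S. proj k w = proj k x \<longrightarrow> lastc k w \<le> lastc k x"
  then have "pb k S (proj k x) = x" using pb_eq[OF assms(1-3) assms(5)] by simp
  then show "x \<in> PB k S" unfolding PB_def using assms(5) by (metis image_eqI)
qed

lemma Omega_iff:
  fixes S :: "(real^('n::{finite,linorder})) set"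
  assumes "1 \<le> k" "k \<le> CARD('n)" "coordok k S" "compact S"
  shows "x \<in> Omega k S \<longleftrightarrow> x \<in> S \<and> (\<exists>w\<in>S. proj k w = proj k x \<and> lastc k w < lastc k x)"
  by (auto simp: Omega_def NB_iff[OF assms] not_le) fastforce

lemma rho_plus_set_iff:
  "x \<in> rho_plus_set k T Q \<longleftrightarrow> proj k x \<in> T \<and> x \<in> Q \<and> x \<noteq> nb k Q (proj k x)"
  unfolding rho_plus_set_def rho_plus_def by (auto split: if_splits)



definition lc :: "'n::{finite,linorder}" where "lc = coord_ix CARD('n)"
definition mc :: "'n::{finite,linorder}" where "mc = coord_ix (CARD('n) - 1)"

lemma card_ge1: "1 \<le> CARD('n::{finite,linorder})"
  by (simp add: Suc_leI)

lemma rank_lc: "rank (lc::'n::{finite,linorder}) = CARD('n) - 1"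
  unfolding lc_def by (rule coord_ix_rank) (auto simp: card_ge1)

lemma rank_mc: "CARD('n::{finite,linorder}) \<ge> 2 \<Longrightarrow> rank (mc::'n) = CARD('n) - 2"
  unfolding mc_def by (subst coord_ix_rank) auto

lemma lc_ne_mc: "CARD('n::{finite,linorder}) \<ge> 2 \<Longrightarrow> (lc::'n) \<noteq> mc"
proof
  assume c: "CARD('n) \<ge> 2" "(lc::'n) = mc"
  have "rank (lc::'n) = rank (mc::'n)" using c(2) by simp
  then show False using rank_lc[where 'n='n] rank_mc[OF c(1)] c(1) by simp
qed

lemma rank_lt_iff: "rank (i::'n::{finite,linorder}) < CARD('n) - 1 \<longleftrightarrow> i \<noteq> lc"
proof
  assume "rank i < CARD('n) - 1" then show "i \<noteq> lc" using rank_lc[where 'n='n] by auto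
next
  assume "i \<noteq> lc" then have "rank i \<noteq> rank (lc::'n)" by (simp add: rank_inj)
  then show "rank i < CARD('n) - 1" using rank_less[of i] rank_lc[where 'n='n] by simp
qed

lemma proj_d_nth: "proj CARD('n) (x::real^('n::{finite,linorder})) $ i = (if i = lc then 0 else x $ i)"
  using rank_lt_iff[of i] by (simp add: proj_nth)

lemma lastc_d: "lastc CARD('n) (x::real^('n::{finite,linorder})) = x $ lc"
  by (simp add: lastc_def lc_def)

lemma lastc_d1: "lastc (CARD('n) - 1) (x::real^('n::{finite,linorder})) = x $ mc"
  by (simp add: lastc_def mc_def)

lemma rank_lt2_iff: "CARD('n::{finite,linorder}) \<ge> 2 \<Longrightarrow> rank (i::'n) < CARD('n) - 2 \<longleftrightarrow> i \<noteq> lc \<and> i \<noteq> mc"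
proof -
  assume c: "CARD('n) \<ge> 2"
  have r: "rank i < CARD('n)" by (rule rank_less)
  have a: "i = lc \<longleftrightarrow> rank i = CARD('n) - 1" using rank_lc[where 'n='n] rank_inj[of i lc] by simp
  have b: "i = mc \<longleftrightarrow> rank i = CARD('n) - 2" using rank_mc[OF c] rank_inj[of i mc] by simp
  show ?thesis
  proof (cases "i = lc")
    case True then show ?thesis using a c by simp
  next
    case False
    show ?thesis
    proof (cases "i = mc")
      case True then show ?thesis using b c by simp
    next
      case False2: False
      then have "rank i \<noteq> CARD('n) - 1" "rank i \<noteq> CARD('n) - 2" using a b False by simp_all
      then show ?thesis using r False False2 by simp
    qed
  qed
qed

lemma proj_d1_nth: "CARD('n) \<ge> 2 \<Longrightarrow>
   proj (CARD('n) - 1) (x::real^('n::{finite,linorder})) $ (i::'n) = (if i = lc \<or> i = mc then 0 else x $ i)"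
proof -
  assume c: "CARD('n) \<ge> 2"
  have e: "CARD('n) - 1 - 1 = CARD('n) - 2" by simp
  show ?thesis by (simp only: proj_nth e rank_lt2_iff[OF c]) auto
qed

lemma coordok_d: "coordok CARD('n) (S::(real^('n::{finite,linorder})) set)"
proof -
  have "\<not> CARD('n) \<le> rank i" for i::'n using rank_less[of i] by simp
  then show ?thesis by (simp add: coordok_def)
qed

lemma coordok_d1: "coordok (CARD('n) - 1) (proj CARD('n) ` (S::(real^('n::{finite,linorder})) set))"
proof -
  have "i = lc" if "CARD('n) - 1 \<le> rank i" for i::'n using rank_lt_iff[of i] that by simp
  then show ?thesis by (auto simp: coordok_def proj_d_nth)
qed

lemma proj_eq_diff:
  fixes u v :: "real^('n::{finite,linorder})"
  assumes "proj CARD('n) u = proj CARD('n) v"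
  shows "u - v = (u$lc - v$lc) *\<^sub>R axis lc 1"
proof -
  have "(u - v) $ i = ((u$lc - v$lc) *\<^sub>R axis lc 1) $ i" for i
  proof (cases "i = lc")
    case True then show ?thesis by simp
  next
    case False then have "proj CARD('n) u $ i = proj CARD('n) v $ i" using assms by simp
    then show ?thesis using False by (simp add: proj_d_nth axis_def)
  qed
  then show ?thesis by (simp only: vec_eq_iff) blast
qed

lemma inner_proj_eq:
  fixes u v a :: "real^('n::{finite,linorder})"
  assumes "proj CARD('n) u = proj CARD('n) v"
  shows "a \<bullet> u - a \<bullet> v = (u$lc - v$lc) * a$lc"
proof -
  have "a \<bullet> u - a \<bullet> v = a \<bullet> (u - v)" by (simp add: inner_diff_right)
  also have "\<dots> = (u$lc - v$lc) * a$lc" using proj_eq_diff[OF assms] by (simp add: inner_axis)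
  finally show ?thesis .
qed

lemma proj_lc_eq:
  fixes u v :: "real^('n::{finite,linorder})"
  assumes "proj CARD('n) u = proj CARD('n) v" "u$lc = v$lc"
  shows "u = v"
  using proj_eq_diff[OF assms(1)] assms(2) by simp

lemma proj_add_axis: "proj CARD('n) ((x::real^('n::{finite,linorder})) + c *\<^sub>R axis lc 1) = proj CARD('n) x"
  by (auto simp: vec_eq_iff proj_d_nth axis_def)

lemma gp_inj:
  fixes P :: "(real^('n::{finite,linorder})) set"
  assumes gp: "general_position P" and R: "R face_of P" and m: "aff_dim R = int m" "m < CARD('n)"
    and w: "w1 \<in> R" "w2 \<in> R" "\<forall>i. rank i < m \<longrightarrow> w1$i = w2$i"
  shows "w1 = w2"
proof -
  have polyP: "polytope P" using gp general_position_def by blast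
  have polyR: "polytope R" using face_of_polytope_polytope[OF polyP R] .
  then obtain V where V: "finite V" "R = convex hull V" unfolding polytope_def by blast
  define E where "E = {v. v extreme_point_of R}"
  have RE: "R = convex hull E" using Krein_Milman_polytope[OF V(1)] V(2) E_def by simp
  have finE: "finite E" unfolding E_def
    using finite_polyhedron_extreme_points polytope_imp_polyhedron polyR by blast
  have EP: "E \<subseteq> {v. v extreme_point_of P}" unfolding E_def using extreme_point_of_face[OF R] by blast
  obtain B where B: "B \<subseteq> E" "affine hull B = affine hull E" "\<not> affine_dependent B"
      "of_nat (card B) = aff_dim E + 1"
    using aff_dim_inner_basis_exists by blast
  have finB: "finite B" using B(1) finE finite_subset by blast
  have "aff_dim E = aff_dim R" using RE aff_dim_convex_hull by metis
  then have cardB: "card B = m + 1" using B(4) m(1) by linarith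
  define f :: "(real,'n) vec \<Rightarrow> (real,'n) vec" where "f = projj CARD('n) (CARD('n) - m)"
  have linf: "linear f" unfolding f_def by (rule linear_projj)
  have gpU: "\<forall>k < CARD('n). \<forall>U. U \<subseteq> {v. v extreme_point_of P} \<and> card U = k + 1 \<longrightarrow>
        (int k) simplex (projj CARD('n) (CARD('n) - k) ` (convex hull U))"
    using gp unfolding general_position_def by (elim conjE)
  have "int m simplex (f ` (convex hull B))"
    unfolding f_def using gpU[rule_format, OF m(2), of B] B(1) EP cardB by simp
  then have "aff_dim (f ` (convex hull B)) = int m" by (rule aff_dim_simplex)
  then have adf: "aff_dim (f ` B) = int m"
    by (simp add: convex_hull_linear_image[OF linf] aff_dim_convex_hull)
  have cfB: "card (f ` B) \<le> card B" by (rule card_image_le[OF finB])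
  have "aff_dim (f ` B) \<le> int (card (f ` B)) - 1" using aff_dim_le_card finB by blast
  then have cfB2: "card (f ` B) = card B" using adf cfB cardB by linarith
  have injf: "inj_on f B" using eq_card_imp_inj_on[OF finB cfB2] .
  have indf: "\<not> affine_dependent (f ` B)"
    by (simp add: affine_independent_iff_card finB adf cfB2 cardB)
  have Raff: "R \<subseteq> affine hull B"
    using RE B(2) convex_hull_subset_affine_hull by blast
  obtain u1 where u1: "sum u1 B = 1" "(\<Sum>v\<in>B. u1 v *\<^sub>R v) = w1"
    using Raff w(1) affine_hull_finite[OF finB] by blast
  obtain u2 where u2: "sum u2 B = 1" "(\<Sum>v\<in>B. u2 v *\<^sub>R v) = w2"
    using Raff w(2) affine_hull_finite[OF finB] by blast
  have fw: "f w1 = f w2" using w(3) unfolding f_def by (auto simp: vec_eq_iff projj_nth)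
  have fsum: "f (\<Sum>v\<in>B. u v *\<^sub>R v) = (\<Sum>v\<in>B. u v *\<^sub>R f v)" for u
    using linf by (simp add: linear_sum linear_scale o_def)
  define U where "U c = u1 (inv_into B f c) - u2 (inv_into B f c)" for c
  have UB: "U (f v) = u1 v - u2 v" if "v \<in> B" for v
    using injf that unfolding U_def by simp
  have s1: "sum U (f ` B) = 0"
  proof -
    have "sum U (f ` B) = (\<Sum>v\<in>B. U (f v))" using sum.reindex[OF injf] by simp
    also have "\<dots> = (\<Sum>v\<in>B. u1 v - u2 v)" using UB by simp
    also have "\<dots> = 0" using u1 u2 by (simp add: sum_subtractf)
    finally show ?thesis .
  qed
  have s2: "(\<Sum>c\<in>f ` B. U c *\<^sub>R c) = 0"
  proof -
    have "(\<Sum>c\<in>f ` B. U c *\<^sub>R c) = (\<Sum>v\<in>B. U (f v) *\<^sub>R f v)" using sum.reindex[OF injf] by simp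
    also have "\<dots> = (\<Sum>v\<in>B. u1 v *\<^sub>R f v - u2 v *\<^sub>R f v)" using UB by (simp add: scaleR_diff_left)
    also have "\<dots> = f w1 - f w2" using fsum[of u1] fsum[of u2] u1 u2 by (simp add: sum_subtractf)
    also have "\<dots> = 0" using fw by simp
    finally show ?thesis .
  qed
  have nd: "\<not> (\<exists>U. sum U (f ` B) = 0 \<and> (\<exists>v\<in>f ` B. U v \<noteq> 0) \<and> (\<Sum>v\<in>f ` B. U v *\<^sub>R v) = 0)"
    using indf unfolding affine_dependent_explicit_finite[OF finite_imageI[OF finB, of f]] .
  have U0: "U c = 0" if "c \<in> f ` B" for c
    using nd s1 s2 that by blast
  have "u1 v = u2 v" if "v \<in> B" for v
    using UB[OF that] U0[of "f v"] that by simp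
  then have "\<forall>v\<in>B. u1 v = u2 v" by blast
  then have "(\<Sum>v\<in>B. u1 v *\<^sub>R v) = (\<Sum>v\<in>B. u2 v *\<^sub>R v)" by (intro sum.cong) auto
  then show ?thesis using u1 u2 by simp
qed



lemma rank_lt_iff': "rank (i::'n::{finite,linorder}) < CARD('n) - Suc 0 \<longleftrightarrow> i \<noteq> lc"
  using rank_lt_iff[of i] by simp

definition posf :: "(real^('n::{finite,linorder})) set \<Rightarrow> (real,'n) vec set \<Rightarrow> bool" where
  "posf P F \<longleftrightarrow> (\<forall>w\<in>P. \<forall>f\<in>F. proj CARD('n) w = proj CARD('n) f \<longrightarrow> w$lc \<le> f$lc)"

definition negf :: "(real^('n::{finite,linorder})) set \<Rightarrow> (real,'n) vec set \<Rightarrow> bool" where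
  "negf P F \<longleftrightarrow> (\<forall>w\<in>P. \<forall>f\<in>F. proj CARD('n) w = proj CARD('n) f \<longrightarrow> f$lc \<le> w$lc)"

definition isrep :: "(real^('n::{finite,linorder})) set \<Rightarrow> (real,'n) vec set \<Rightarrow> (real,'n) vec \<Rightarrow> real \<Rightarrow> bool" where
  "isrep P F a b \<longleftrightarrow> a$lc \<noteq> 0 \<and> P \<subseteq> {x. a \<bullet> x \<le> b} \<and> F = P \<inter> {x. a \<bullet> x = b}
      \<and> affine hull F = {x. a \<bullet> x = b}"

locale gpos =
  fixes P :: "(real^('n::{finite,linorder})) set"
  assumes card2: "CARD('n) \<ge> 2" and gpP: "general_position P"
begin

lemma polyP: "polytope P" using gpP general_position_def by blast
lemma compactP: "compact P" using polyP polytope_imp_compact by blast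
lemma convexP: "convex P" using polyP polytope_imp_convex by blast
lemma polyhP: "polyhedron P" using polyP polytope_imp_polyhedron by blast
lemma affdimP: "aff_dim P = int CARD('n)" using gpP general_position_def by blast

lemma facet_compact: "F facet_of P \<Longrightarrow> compact F"
  using face_of_polytope_polytope[OF polyP] facet_of_imp_face_of polytope_imp_compact by blast

lemma facet_convex: "F facet_of P \<Longrightarrow> convex F"
  using face_of_imp_convex facet_of_imp_face_of by blast

lemma facet_affdim: "F facet_of P \<Longrightarrow> aff_dim F = int (CARD('n) - 1)"
  using affdimP unfolding facet_of_def by (simp add: of_nat_diff)

lemma facet_rep:
  assumes F: "F facet_of P"
  shows "\<exists>a b. isrep P F a b"
proof -
  obtain a b where ab: "a \<noteq> 0" "P \<subseteq> {x. a \<bullet> x \<le> b}" "F = P \<inter> {x. a \<bullet> x = b}"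
    using facet_of_polyhedron[OF polyhP F] by blast
  have sub: "F \<subseteq> {x. a \<bullet> x = b}" using ab(3) by blast
  have "aff_dim {x. a \<bullet> x = b} = int CARD('n) - 1" using ab(1) by simp
  then have "aff_dim F = aff_dim {x. a \<bullet> x = b}" using facet_affdim[OF F] card_ge1[where 'n='n]
    by (simp add: of_nat_diff)
  then have aff: "affine hull F = {x. a \<bullet> x = b}"
    using aff_dim_eq_full_gen[OF sub] affine_hyperplane by (metis affine_hull_eq)
  have "a$lc \<noteq> 0"
  proof
    assume a0: "a$lc = 0"
    have "F \<noteq> {}" using F facet_of_def by blast
    then obtain x where x: "x \<in> rel_interior F" using rel_interior_eq_empty facet_convex[OF F] by blast
    then obtain e where e: "e > 0" "ball x e \<inter> affine hull F \<subseteq> F" "x \<in> F"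
      using mem_rel_interior_ball by blast
    define x' where "x' = x + (e/2) *\<^sub>R axis lc 1"
    have "a \<bullet> x' = a \<bullet> x" unfolding x'_def using a0 by (simp add: inner_add_right inner_axis)
    then have "x' \<in> affine hull F" using aff e(3) sub by auto
    moreover have "x' \<in> ball x e" unfolding x'_def using e(1) by (simp add: dist_norm)
    ultimately have x'F: "x' \<in> F" using e(2) by blast
    have "x = x'"
    proof (rule gp_inj[OF gpP facet_of_imp_face_of[OF F] facet_affdim[OF F]])
      show "CARD('n) - 1 < CARD('n)" using card_ge1[where 'n='n] by simp
      show "x \<in> F" "x' \<in> F" using e(3) x'F by auto
      show "\<forall>i. rank i < CARD('n) - 1 \<longrightarrow> x $ i = x' $ i"
        unfolding x'_def by (auto simp: rank_lt_iff' axis_def)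
    qed
    then have "(x' - x) $ lc = 0" by simp
    then show False unfolding x'_def using e(1) by simp
  qed
  then show ?thesis unfolding isrep_def using ab aff by blast
qed

lemma rep_posf: "isrep P F a b \<Longrightarrow> a$lc > 0 \<Longrightarrow> posf P F"
  unfolding isrep_def posf_def
proof (intro ballI impI)
  fix w f assume r: "a $ lc \<noteq> 0 \<and> P \<subseteq> {x. a \<bullet> x \<le> b} \<and> F = P \<inter> {x. a \<bullet> x = b} \<and> affine hull F = {x. a \<bullet> x = b}"
    and a: "a$lc > 0" and w: "w \<in> P" and f: "f \<in> F" and pr: "proj CARD('n) w = proj CARD('n) f"
  have "a \<bullet> w - a \<bullet> f \<le> 0" using r w f by auto
  then have "(w$lc - f$lc) * a$lc \<le> 0" using inner_proj_eq[OF pr, of a] by simp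
  then show "w$lc \<le> f$lc" using a by (simp add: mult_le_0_iff)
qed

lemma rep_negf: "isrep P F a b \<Longrightarrow> a$lc < 0 \<Longrightarrow> negf P F"
  unfolding isrep_def negf_def
proof (intro ballI impI)
  fix w f assume r: "a $ lc \<noteq> 0 \<and> P \<subseteq> {x. a \<bullet> x \<le> b} \<and> F = P \<inter> {x. a \<bullet> x = b} \<and> affine hull F = {x. a \<bullet> x = b}"
    and a: "a$lc < 0" and w: "w \<in> P" and f: "f \<in> F" and pr: "proj CARD('n) w = proj CARD('n) f"
  have "a \<bullet> w - a \<bullet> f \<le> 0" using r w f by auto
  then have "(w$lc - f$lc) * a$lc \<le> 0" using inner_proj_eq[OF pr, of a] by simp
  then show "f$lc \<le> w$lc" using a by (simp add: mult_le_0_iff)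
qed

lemma rep_shift:
  assumes r: "isrep P F a b" and x: "x \<in> rel_interior F"
  shows "\<exists>\<mu>. \<mu> * a$lc < 0 \<and> x + \<mu> *\<^sub>R axis lc 1 \<in> P"
proof -
  have a0: "a$lc \<noteq> 0" and Ph: "P \<subseteq> {x. a \<bullet> x \<le> b}" and Fe: "F = P \<inter> {x. a \<bullet> x = b}"
    and aff: "affine hull F = {x. a \<bullet> x = b}" using r unfolding isrep_def by auto
  have "a \<noteq> 0" using a0 by auto
  have "\<exists>c\<in>P. a \<bullet> c < b"
  proof (rule ccontr)
    assume "\<not> (\<exists>c\<in>P. a \<bullet> c < b)"
    then have "P \<subseteq> {x. a \<bullet> x = b}" using Ph by force
    then have "aff_dim P \<le> aff_dim {x. a \<bullet> x = b}" by (rule aff_dim_subset)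
    then show False using affdimP \<open>a \<noteq> 0\<close> by simp
  qed
  then obtain c where c: "c \<in> P" "a \<bullet> c < b" by blast
  obtain e where e: "e > 0" "ball x e \<inter> affine hull F \<subseteq> F" and xF: "x \<in> F"
    using x mem_rel_interior_ball by blast
  have xP: "x \<in> P" and ax: "a \<bullet> x = b" using xF Fe by auto
  define K where "K = norm (c - x) + \<bar>a \<bullet> c - b\<bar> / \<bar>a$lc\<bar> + 1"
  have K0: "K > 0" unfolding K_def by (simp add: add_nonneg_pos)
  define t where "t = min (1/2) (e / (2*K))"
  have t0: "t > 0" "t \<le> 1/2" "t \<le> e / (2*K)" unfolding t_def using e(1) K0 by auto
  define lam where "lam = t * (a \<bullet> c - b) / a$lc"
  define p where "p = x + t *\<^sub>R (c - x)"
  define q where "q = x - t *\<^sub>R (c - x) + lam *\<^sub>R axis lc 1"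
  have pP: "p \<in> P"
  proof -
    have "(1 - t) *\<^sub>R x + t *\<^sub>R c \<in> P" using convexD[OF convexP xP c(1)] t0 by simp
    then show ?thesis unfolding p_def by (simp add: algebra_simps)
  qed
  have aq: "a \<bullet> q = b"
    unfolding q_def lam_def using a0 ax by (simp add: inner_add_right inner_diff_right inner_axis field_simps)
  have "norm (q - x) \<le> t * norm (c - x) + \<bar>lam\<bar>"
  proof -
    have "norm (q - x) = norm (lam *\<^sub>R axis lc 1 - t *\<^sub>R (c - x))" unfolding q_def by (simp add: algebra_simps)
    also have "\<dots> \<le> norm (lam *\<^sub>R (axis lc 1 :: (real,'n) vec)) + norm (t *\<^sub>R (c - x))" using norm_triangle_ineq4 by blast
    also have "\<dots> = \<bar>lam\<bar> + t * norm (c - x)" using t0 by simp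
    finally show ?thesis by simp
  qed
  also have "\<bar>lam\<bar> = t * (\<bar>a \<bullet> c - b\<bar> / \<bar>a$lc\<bar>)" unfolding lam_def using t0 by (simp add: abs_mult abs_divide)
  finally have "norm (q - x) \<le> t * (K - 1)" unfolding K_def by (simp add: algebra_simps)
  also have "\<dots> < t * K" using t0 by simp
  also have "\<dots> \<le> e / 2" using t0 K0 by (simp add: le_divide_eq algebra_simps)
  finally have "dist x q < e" using e(1) by (simp add: dist_norm norm_minus_commute)
  then have "q \<in> F" using e(2) aq aff by auto
  then have qP: "q \<in> P" using Fe by auto
  have "(1/2) *\<^sub>R p + (1/2) *\<^sub>R q \<in> P" using convexD[OF convexP pP qP] by simp
  moreover have "(1/2) *\<^sub>R p + (1/2) *\<^sub>R q = x + (lam/2) *\<^sub>R axis lc 1"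
    unfolding p_def q_def by (simp add: vec_eq_iff field_simps)
  moreover have "(lam/2) * a$lc < 0" unfolding lam_def using a0 t0 c(2) by (simp add: mult_pos_neg)
  ultimately show ?thesis by metis
qed

lemma facet_posneg:
  assumes F: "F facet_of P"
  shows "(posf P F \<and> \<not> negf P F) \<or> (negf P F \<and> \<not> posf P F)"
proof -
  obtain a b where r: "isrep P F a b" using facet_rep[OF F] by blast
  have "F \<noteq> {}" using F facet_of_def by blast
  then obtain x where x: "x \<in> rel_interior F" using rel_interior_eq_empty facet_convex[OF F] by blast
  have xF: "x \<in> F" using x rel_interior_subset by blast
  obtain \<mu> where mu: "\<mu> * a$lc < 0" "x + \<mu> *\<^sub>R axis lc 1 \<in> P" using rep_shift[OF r x] by blast
  have pr: "proj CARD('n) (x + \<mu> *\<^sub>R axis lc 1) = proj CARD('n) x" by (rule proj_add_axis)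
  have a0: "a$lc \<noteq> 0" using r isrep_def by blast
  show ?thesis
  proof (cases "a$lc > 0")
    case True
    then have "\<mu> < 0" using mu(1) by (simp add: mult_less_0_iff)
    then have "\<not> negf P F" unfolding negf_def using mu(2) pr xF by force
    then show ?thesis using rep_posf[OF r True] by blast
  next
    case False
    then have neg: "a$lc < 0" using a0 by simp
    then have "\<mu> > 0" using mu(1) by (simp add: mult_less_0_iff)
    then have "\<not> posf P F" unfolding posf_def using mu(2) pr xF by force
    then show ?thesis using rep_negf[OF r neg] by blast
  qed
qed

lemma facet_sign_eq:
  assumes F: "F facet_of P"
  shows "facet_sign P F = (if posf P F then 1 else -1)"
proof -
  have "F \<noteq> {}" using F facet_of_def by blast
  then obtain x where x: "x \<in> rel_interior F" using rel_interior_eq_empty facet_convex[OF F] by blast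
  have xF: "x \<in> F" using x rel_interior_subset by blast
  have xP: "x \<in> P" using xF facet_of_imp_subset[OF F] by blast
  show ?thesis
  proof (cases "posf P F")
    case True
    have "x \<in> PB CARD('n) P"
      using PB_iff[OF card_ge1 order_refl coordok_d compactP xP] True xF unfolding posf_def
      by (simp add: lastc_d)
    then show ?thesis using True x unfolding facet_sign_def by auto
  next
    case False
    then have ng: "negf P F" using facet_posneg[OF F] by blast
    obtain a b where r: "isrep P F a b" using facet_rep[OF F] by blast
    have a0: "a$lc < 0"
    proof -
      have "a$lc \<noteq> 0" using r isrep_def by blast
      moreover have "\<not> a$lc > 0" using rep_posf[OF r] False by blast
      ultimately show ?thesis by simp
    qed
    have notPB: "z \<notin> PB CARD('n) P" if z: "z \<in> rel_interior F" for z
    proof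
      assume "z \<in> PB CARD('n) P"
      have zF: "z \<in> F" using z rel_interior_subset by blast
      have zP: "z \<in> P" using zF facet_of_imp_subset[OF F] by blast
      obtain \<mu> where mu: "\<mu> * a$lc < 0" "z + \<mu> *\<^sub>R axis lc 1 \<in> P" using rep_shift[OF r z] by blast
      have "\<mu> > 0" using mu(1) a0 by (simp add: mult_less_0_iff)
      moreover have "(z + \<mu> *\<^sub>R axis lc 1)$lc \<le> z$lc"
      proof -
        have "\<forall>w\<in>P. proj CARD('n) w = proj CARD('n) z \<longrightarrow> w$lc \<le> z$lc"
          using \<open>z \<in> PB CARD('n) P\<close> PB_iff[OF card_ge1 order_refl coordok_d compactP zP]
          by (simp add: lastc_d)
        then show ?thesis using mu(2) proj_add_axis[of z \<mu>] by blast
      qed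
      ultimately show False by simp
    qed
    have "x \<in> NB CARD('n) P"
      using NB_iff[OF card_ge1 order_refl coordok_d compactP xP] ng xF unfolding negf_def
      by (simp add: lastc_d)
    then show ?thesis using False x notPB unfolding facet_sign_def by auto
  qed
qed

end



lemma line_dich:
  fixes C :: "'a::real_vector set"
  assumes "convex C"
  shows "\<exists>\<epsilon>>0. (\<forall>s. 0 < s \<and> s < \<epsilon> \<longrightarrow> y - s *\<^sub>R v \<in> C) \<or> (\<forall>s. 0 < s \<and> s < \<epsilon> \<longrightarrow> y - s *\<^sub>R v \<notin> C)"
proof (cases "\<exists>\<epsilon>>0. \<forall>s. 0 < s \<and> s < \<epsilon> \<longrightarrow> y - s *\<^sub>R v \<notin> C")
  case True then show ?thesis by blast
next
  case False
  then have ex: "\<forall>\<epsilon>>0. \<exists>s. 0 < s \<and> s < \<epsilon> \<and> y - s *\<^sub>R v \<in> C" by blast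
  then obtain s1 where s1: "0 < s1" "y - s1 *\<^sub>R v \<in> C" by (meson zero_less_one)
  have "y - s *\<^sub>R v \<in> C" if s: "0 < s" "s < s1" for s
  proof -
    obtain s' where s': "0 < s'" "s' < s" "y - s' *\<^sub>R v \<in> C" using ex s(1) by blast
    define u where "u = (s - s') / (s1 - s')"
    have u: "0 \<le> u" "u \<le> 1" unfolding u_def using s s' by (auto simp: divide_simps)
    have "(1 - u) *\<^sub>R (y - s' *\<^sub>R v) + u *\<^sub>R (y - s1 *\<^sub>R v) \<in> C"
      using convexD[OF assms s'(3) s1(2)] u by simp
    moreover have "(1 - u) *\<^sub>R (y - s' *\<^sub>R v) + u *\<^sub>R (y - s1 *\<^sub>R v) = y - s *\<^sub>R v"
    proof -
      have "u * (s1 - s') = s - s'" unfolding u_def using s s' by simp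
      have "(1 - u) * s' + u * s1 = s' + u * (s1 - s')" by (simp add: algebra_simps)
      also have "\<dots> = s" using \<open>u * (s1 - s') = s - s'\<close> by simp
      finally have "(1 - u) * s' + u * s1 = s" .
      then have "((1 - u) * s' + u * s1) *\<^sub>R v = s *\<^sub>R v" by simp
      then show ?thesis by (simp add: algebra_simps)
    qed
    ultimately show ?thesis by simp
  qed
  then show ?thesis using s1(1) by blast
qed

lemma finite_eps:
  assumes "finite A" "\<forall>a\<in>A. \<exists>\<epsilon>::real. \<epsilon> > 0 \<and> Q a \<epsilon>"
    "\<And>a \<epsilon> \<epsilon>'. Q a \<epsilon> \<Longrightarrow> 0 < \<epsilon>' \<Longrightarrow> \<epsilon>' \<le> \<epsilon> \<Longrightarrow> Q a \<epsilon>'"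
  shows "\<exists>\<epsilon>>0. \<forall>a\<in>A. Q a \<epsilon>"
  using assms(1,2)
proof (induction A rule: finite_induct)
  case empty then show ?case by (intro exI[of _ 1]) simp
next
  case (insert a A)
  then obtain e1 where e1: "e1 > 0" "\<forall>b\<in>A. Q b e1" by auto
  obtain e2 where e2: "e2 > 0" "Q a e2" using insert.prems by auto
  show ?case
    by (rule exI[of _ "min e1 e2"]) (use e1 e2 assms(3) in auto)
qed

lemma proj_d1_nth': "CARD('n) \<ge> 2 \<Longrightarrow>
   proj (CARD('n) - Suc 0) (x::real^('n::{finite,linorder})) $ (i::'n) = (if i = lc \<or> i = mc then 0 else x $ i)"
  using proj_d1_nth[of x i] by simp

lemma lastc_d1': "lastc (CARD('n) - Suc 0) (x::real^('n::{finite,linorder})) = x $ mc"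
  using lastc_d1[of x] by simp

definition zz :: "real^('n::{finite,linorder}) \<Rightarrow> real \<Rightarrow> (real,'n) vec" where
  "zz y s = y - s *\<^sub>R axis mc 1"

definition dich :: "(real^('n::{finite,linorder})) set \<Rightarrow> (real,'n) vec \<Rightarrow> real \<Rightarrow> bool" where
  "dich C y \<epsilon> \<longleftrightarrow> (\<forall>s. 0 < s \<and> s < \<epsilon> \<longrightarrow> zz y s \<in> C) \<or> (\<forall>s. 0 < s \<and> s < \<epsilon> \<longrightarrow> zz y s \<notin> C)"

lemma dich_exists: "convex C \<Longrightarrow> \<exists>\<epsilon>>0. dich C y \<epsilon>"
  unfolding dich_def zz_def by (rule line_dich)

lemma dich_mono: "dich C y \<epsilon> \<Longrightarrow> 0 < \<epsilon>' \<Longrightarrow> \<epsilon>' \<le> \<epsilon> \<Longrightarrow> dich C y \<epsilon>'"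
  unfolding dich_def by force

lemma zz_nth: "zz y s $ i = (if i = mc then y $ i - s else y $ i)"
  by (simp add: zz_def axis_def)

lemma dist_zz: "dist y (zz y s) = \<bar>s\<bar>"
  by (simp add: zz_def dist_norm)

lemma closed_zz:
  assumes "closed C" "\<epsilon> > 0" "\<forall>s. 0 < s \<and> s < \<epsilon> \<longrightarrow> zz y s \<in> C"
  shows "y \<in> C"
proof (rule ccontr)
  assume "y \<notin> C"
  then obtain r where r: "r > 0" "ball y r \<subseteq> - C"
    using assms(1) open_contains_ball[of "- C"] by (auto simp: closed_def)
  define s where "s = min r \<epsilon> / 2"
  have "0 < s" "s < \<epsilon>" "s < r" unfolding s_def using r assms(2) by auto
  then have "zz y s \<in> C" "zz y s \<in> ball y r" using assms(3) dist_zz[of y s] by auto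
  then show False using r(2) by blast
qed

lemma zz_convex:
  assumes "convex C" "y \<in> C" "zz y s \<in> C" "0 < s'" "s' \<le> s"
  shows "zz y s' \<in> C"
proof -
  define u where "u = s' / s"
  have s0: "s > 0" using assms by linarith
  have u: "0 \<le> u" "u \<le> 1" unfolding u_def using assms(4,5) s0 by auto
  have "(1 - u) *\<^sub>R y + u *\<^sub>R zz y s \<in> C" using convexD[OF assms(1,2,3)] u by simp
  moreover have "(1 - u) *\<^sub>R y + u *\<^sub>R zz y s = zz y s'"
    unfolding zz_def u_def using s0 by (simp add: algebra_simps)
  ultimately show ?thesis by simp
qed

context gpos
begin

definition good :: "(real,'n) vec \<Rightarrow> real \<Rightarrow> bool" where
  "good y \<epsilon> \<longleftrightarrow> \<epsilon> > 0 \<and> (\<forall>F. F face_of P \<longrightarrow> dich (proj CARD('n) ` F) y \<epsilon>)"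

lemma good_exists: "\<exists>\<epsilon>. good (y::(real,'n) vec) \<epsilon>"
proof -
  have fin: "finite {F. F face_of P}" using finite_polytope_faces[OF polyP] .
  have "\<forall>F\<in>{F. F face_of P}. \<exists>\<epsilon>. \<epsilon> > 0 \<and> dich (proj CARD('n) ` F) y \<epsilon>"
  proof
    fix F assume "F \<in> {F. F face_of P}"
    then have "convex F" using face_of_imp_convex by blast
    then have "convex (proj CARD('n) ` F)" using convex_linear_image linear_proj by blast
    then show "\<exists>\<epsilon>. \<epsilon> > 0 \<and> dich (proj CARD('n) ` F) y \<epsilon>" using dich_exists by blast
  qed
  then obtain \<epsilon> where "\<epsilon> > 0" "\<forall>F\<in>{F. F face_of P}. dich (proj CARD('n) ` F) y \<epsilon>"
    using finite_eps[OF fin, of "\<lambda>F \<epsilon>. dich (proj CARD('n) ` F) y \<epsilon>"] dich_mono by blast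
  then show ?thesis unfolding good_def by blast
qed

lemma proj_zz: "(y::(real,'n) vec) $ lc = 0 \<Longrightarrow> proj CARD('n) (zz y s) = zz y s"
  using lc_ne_mc[OF card2] by (auto simp: vec_eq_iff proj_d_nth zz_nth)

lemma lower_face_avoid:
  assumes g: "good y \<epsilon>" and R: "R face_of P" and dimR: "aff_dim R \<le> int CARD('n) - 2"
    and s: "0 < s" "s < \<epsilon>"
  shows "zz y s \<notin> proj CARD('n) ` R"
proof -
  have "\<not> (\<forall>s. 0 < s \<and> s < \<epsilon> \<longrightarrow> zz y s \<in> proj CARD('n) ` R)"
  proof
    assume all: "\<forall>s. 0 < s \<and> s < \<epsilon> \<longrightarrow> zz y s \<in> proj CARD('n) ` R"
    have e0: "\<epsilon> > 0" using g good_def by blast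
    obtain r1 where r1: "r1 \<in> R" "proj CARD('n) r1 = zz y (\<epsilon>/3)" using all[rule_format, of "\<epsilon>/3"] e0 by auto
    obtain r2 where r2: "r2 \<in> R" "proj CARD('n) r2 = zz y (2*\<epsilon>/3)" using all[rule_format, of "2*\<epsilon>/3"] e0 by auto
    have "R \<noteq> {}" using r1 by blast
    then have "aff_dim R \<ge> 0" using aff_dim_negative_iff[of R] by linarith
    then obtain m where m: "aff_dim R = int m" by (metis nonneg_eq_int)
    have mle: "m \<le> CARD('n) - 2" using m dimR card2 by linarith
    have "r1 = r2"
    proof (rule gp_inj[OF gpP R m])
      show "m < CARD('n)" using mle card2 by linarith
      show "r1 \<in> R" "r2 \<in> R" using r1 r2 by auto
      show "\<forall>i. rank i < m \<longrightarrow> r1 $ i = r2 $ i"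
      proof (intro allI impI)
        fix i :: 'n assume "rank i < m"
        then have "rank i < CARD('n) - 2" using mle by linarith
        then have i: "i \<noteq> lc" "i \<noteq> mc" using rank_lt2_iff[OF card2] by auto
        have "proj CARD('n) r1 $ i = proj CARD('n) r2 $ i" using r1(2) r2(2) i by (simp add: zz_nth)
        then show "r1 $ i = r2 $ i" using i by (simp add: proj_d_nth)
      qed
    qed
    then have "zz y (\<epsilon>/3) $ mc = zz y (2*\<epsilon>/3) $ mc" using r1 r2 by simp
    then show False using e0 by (simp add: zz_nth)
  qed
  moreover have "dich (proj CARD('n) ` R) y \<epsilon>" using g R good_def by blast
  ultimately show ?thesis using s unfolding dich_def by blast
qed

lemma Omega1_iff:
  assumes F: "F face_of P" and y: "y $ lc = 0"
  shows "y \<in> Omega (CARD('n) - 1) (proj CARD('n) ` F) \<longleftrightarrow>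
     y \<in> proj CARD('n) ` F \<and> (\<exists>s>0. zz y s \<in> proj CARD('n) ` F)"
proof -
  have cF: "compact F"
    using face_of_polytope_polytope[OF polyP F] polytope_imp_compact by blast
  have cpF: "compact (proj CARD('n) ` F)" using compact_continuous_image[OF continuous_on_proj cF] .
  have k: "1 \<le> CARD('n) - 1" "CARD('n) - 1 \<le> CARD('n)" using card2 by auto
  note O = Omega_iff[OF k coordok_d1 cpF]
  show ?thesis
  proof
    assume "y \<in> Omega (CARD('n) - 1) (proj CARD('n) ` F)"
    then have "y \<in> proj CARD('n) ` F \<and> (\<exists>w\<in>proj CARD('n) ` F. proj (CARD('n) - 1) w = proj (CARD('n) - 1) y
       \<and> lastc (CARD('n) - 1) w < lastc (CARD('n) - 1) y)" using O[of y] by blast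
    then obtain w where w: "y \<in> proj CARD('n) ` F" "w \<in> proj CARD('n) ` F"
       "proj (CARD('n) - 1) w = proj (CARD('n) - 1) y" "lastc (CARD('n) - 1) w < lastc (CARD('n) - 1) y"
      by blast
    note w = w(1-3) w(4)[unfolded lastc_d1]
    have wl: "w $ lc = 0" using w(2) by (auto simp: proj_d_nth)
    have "w = zz y (y$mc - w$mc)"
    proof (subst vec_eq_iff, intro allI)
      fix i :: 'n
      show "w $ i = zz y (y $ mc - w $ mc) $ i"
      proof (cases "i = lc \<or> i = mc")
        case True then show ?thesis using wl y lc_ne_mc[OF card2] by (auto simp: zz_nth)
      next
        case False
        then have "proj (CARD('n) - 1) w $ i = proj (CARD('n) - 1) y $ i" using w(3) by simp
        then show ?thesis using False by (simp add: proj_d1_nth'[OF card2] zz_nth)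
      qed
    qed
    then show "y \<in> proj CARD('n) ` F \<and> (\<exists>s>0. zz y s \<in> proj CARD('n) ` F)"
      using w by (metis diff_gt_0_iff_gt)
  next
    assume a: "y \<in> proj CARD('n) ` F \<and> (\<exists>s>0. zz y s \<in> proj CARD('n) ` F)"
    then obtain s where s: "s > 0" "zz y s \<in> proj CARD('n) ` F" by blast
    have "proj (CARD('n) - 1) (zz y s) = proj (CARD('n) - 1) y"
      by (auto simp: vec_eq_iff proj_d1_nth'[OF card2] zz_nth)
    moreover have "lastc (CARD('n) - 1) (zz y s) < lastc (CARD('n) - 1) y"
      using s by (simp add: lastc_d1' zz_nth)
    ultimately show "y \<in> Omega (CARD('n) - 1) (proj CARD('n) ` F)" using O a s by blast
  qed
qed

lemma Omega1_act:
  assumes g: "good y \<epsilon>" and F: "F face_of P" and y: "y $ lc = 0"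
  shows "y \<in> Omega (CARD('n) - 1) (proj CARD('n) ` F) \<longleftrightarrow> zz y (\<epsilon>/2) \<in> proj CARD('n) ` F"
proof -
  have e0: "\<epsilon> > 0" using g good_def by blast
  have d: "dich (proj CARD('n) ` F) y \<epsilon>" using g F good_def by blast
  have cF: "compact F"
    using face_of_polytope_polytope[OF polyP F] polytope_imp_compact by blast
  have cpF: "compact (proj CARD('n) ` F)" using compact_continuous_image[OF continuous_on_proj cF] .
  have cvF: "convex (proj CARD('n) ` F)"
    using convex_linear_image linear_proj face_of_imp_convex[OF F] by blast
  show ?thesis
  proof
    assume "y \<in> Omega (CARD('n) - 1) (proj CARD('n) ` F)"
    then obtain s where s: "y \<in> proj CARD('n) ` F" "s > 0" "zz y s \<in> proj CARD('n) ` F"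
      using Omega1_iff[OF F y] by blast
    define s' where "s' = min s \<epsilon> / 2"
    have s': "0 < s'" "s' < \<epsilon>" "s' \<le> s" unfolding s'_def using s e0 by auto
    have "zz y s' \<in> proj CARD('n) ` F" using zz_convex[OF cvF s(1) s(3) s'(1) s'(3)] .
    then have "\<forall>s. 0 < s \<and> s < \<epsilon> \<longrightarrow> zz y s \<in> proj CARD('n) ` F" using d s' unfolding dich_def by blast
    then show "zz y (\<epsilon>/2) \<in> proj CARD('n) ` F" using e0 by simp
  next
    assume a: "zz y (\<epsilon>/2) \<in> proj CARD('n) ` F"
    have "0 < \<epsilon>/2 \<and> \<epsilon>/2 < \<epsilon>" using e0 by simp
    then have "\<not> (\<forall>s. 0 < s \<and> s < \<epsilon> \<longrightarrow> zz y s \<notin> proj CARD('n) ` F)" using a by blast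
    then have all: "\<forall>s. 0 < s \<and> s < \<epsilon> \<longrightarrow> zz y s \<in> proj CARD('n) ` F"
      using d unfolding dich_def by blast
    then have "y \<in> proj CARD('n) ` F" using closed_zz[OF compact_imp_closed[OF cpF] e0] by blast
    then show "y \<in> Omega (CARD('n) - 1) (proj CARD('n) ` F)"
      using Omega1_iff[OF F y] a e0 by (meson half_gt_zero)
  qed
qed

end



context gpos
begin

lemma affhullP: "affine hull P = UNIV"
  using affdimP aff_dim_eq_full[of P] by simp

lemma relintP: "rel_interior P = interior P"
  using rel_interior_interior[OF affhullP] .

lemma facet_polyh: "F facet_of P \<Longrightarrow> polyhedron F"
  using face_of_polytope_polytope[OF polyP] facet_of_imp_face_of polytope_imp_polyhedron by blast

lemma generic_facet:
  assumes g: "good y \<epsilon>" and t: "t \<in> P" "proj CARD('n) t = zz y (\<epsilon>/2)" and ni: "t \<notin> interior P"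
  shows "\<exists>F a b. F facet_of P \<and> isrep P F a b \<and> t \<in> rel_interior F"
proof -
  have e0: "\<epsilon> > 0" using g good_def by blast
  have "t \<in> rel_frontier P"
    unfolding rel_frontier_def using t(1) ni relintP closure_closed compact_imp_closed[OF compactP] by auto
  then obtain F where F: "F facet_of P" "t \<in> F" using rel_frontier_of_polyhedron[OF polyhP] by blast
  have "t \<in> rel_interior F"
  proof (rule ccontr)
    assume "t \<notin> rel_interior F"
    then have "t \<in> rel_frontier F"
      unfolding rel_frontier_def using F(2) closure_subset by blast
    then obtain G where G: "G facet_of F" "t \<in> G" using rel_frontier_of_polyhedron[OF facet_polyh[OF F(1)]] by blast
    have GP: "G face_of P" using face_of_trans[OF facet_of_imp_face_of[OF G(1)] facet_of_imp_face_of[OF F(1)]] .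
    have "aff_dim G = aff_dim F - 1" using G(1) facet_of_def by blast
    then have "aff_dim G \<le> int CARD('n) - 2" using facet_affdim[OF F(1)] card2 by (simp add: of_nat_diff)
    then have "zz y (\<epsilon>/2) \<notin> proj CARD('n) ` G" using lower_face_avoid[OF g GP] e0 by simp
    then show False using G(2) t(2) by (metis image_eqI)
  qed
  moreover obtain a b where "isrep P F a b" using facet_rep[OF F(1)] by blast
  ultimately show ?thesis using F(1) by blast
qed

lemma top_facet:
  assumes g: "good y \<epsilon>" and t: "t \<in> P" "proj CARD('n) t = zz y (\<epsilon>/2)"
    and top: "\<forall>w\<in>P. proj CARD('n) w = proj CARD('n) t \<longrightarrow> w$lc \<le> t$lc"
  shows "\<exists>F. F facet_of P \<and> posf P F \<and> t \<in> F"
proof -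
  have ni: "t \<notin> interior P"
  proof
    assume "t \<in> interior P"
    then obtain r where r: "r > 0" "ball t r \<subseteq> P" using mem_interior by blast
    have "t + (r/2) *\<^sub>R axis lc 1 \<in> ball t r" using r(1) by (simp add: dist_norm)
    then have "t + (r/2) *\<^sub>R axis lc 1 \<in> P" using r(2) by blast
    then have "(t + (r/2) *\<^sub>R axis lc 1) $ lc \<le> t $ lc" using top proj_add_axis[of t "r/2"] by blast
    then show False using r(1) by simp
  qed
  obtain F a b where F: "F facet_of P" "isrep P F a b" "t \<in> rel_interior F"
    using generic_facet[OF g t ni] by blast
  obtain \<mu> where mu: "\<mu> * a$lc < 0" "t + \<mu> *\<^sub>R axis lc 1 \<in> P" using rep_shift[OF F(2,3)] by blast
  have "(t + \<mu> *\<^sub>R axis lc 1) $ lc \<le> t $ lc" using top mu(2) proj_add_axis[of t \<mu>] by blast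
  then have "\<mu> \<le> 0" by simp
  then have "a$lc > 0" using mu(1) by (simp add: mult_less_0_iff)
  then have "posf P F" using rep_posf[OF F(2)] by blast
  then show ?thesis using F(1,3) rel_interior_subset by blast
qed

lemma bot_facet:
  assumes g: "good y \<epsilon>" and t: "t \<in> P" "proj CARD('n) t = zz y (\<epsilon>/2)"
    and bot: "\<forall>w\<in>P. proj CARD('n) w = proj CARD('n) t \<longrightarrow> t$lc \<le> w$lc"
  shows "\<exists>F. F facet_of P \<and> negf P F \<and> t \<in> F"
proof -
  have ni: "t \<notin> interior P"
  proof
    assume "t \<in> interior P"
    then obtain r where r: "r > 0" "ball t r \<subseteq> P" using mem_interior by blast
    have "t + (-r/2) *\<^sub>R axis lc 1 \<in> ball t r" using r(1) by (simp add: dist_norm)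
    then have "t + (-r/2) *\<^sub>R axis lc 1 \<in> P" using r(2) by blast
    then have "t $ lc \<le> (t + (-r/2) *\<^sub>R axis lc 1) $ lc" using bot proj_add_axis[of t "-r/2"] by blast
    then show False using r(1) by simp
  qed
  obtain F a b where F: "F facet_of P" "isrep P F a b" "t \<in> rel_interior F"
    using generic_facet[OF g t ni] by blast
  obtain \<mu> where mu: "\<mu> * a$lc < 0" "t + \<mu> *\<^sub>R axis lc 1 \<in> P" using rep_shift[OF F(2,3)] by blast
  have "t $ lc \<le> (t + \<mu> *\<^sub>R axis lc 1) $ lc" using bot mu(2) proj_add_axis[of t \<mu>] by blast
  then have "\<mu> \<ge> 0" by simp
  then have "a$lc < 0" using mu(1) by (simp add: mult_less_0_iff)
  then have "negf P F" using rep_negf[OF F(2)] by blast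
  then show ?thesis using F(1,3) rel_interior_subset by blast
qed

lemma facets_meet:
  assumes g: "good y \<epsilon>" and F: "F facet_of P" and G: "G facet_of P" and t: "t \<in> F" "t \<in> G"
    and pt: "proj CARD('n) t = zz y (\<epsilon>/2)"
  shows "F = G"
proof -
  have e0: "\<epsilon> > 0" using g good_def by blast
  have FG: "(F \<inter> G) face_of P" using face_of_Int[OF facet_of_imp_face_of[OF F] facet_of_imp_face_of[OF G]] .
  have "F \<inter> G = F"
  proof (rule ccontr)
    assume ne: "F \<inter> G \<noteq> F"
    have "(F \<inter> G) face_of F" using face_of_subset[OF FG] facet_of_imp_subset[OF F] by blast
    then have "aff_dim (F \<inter> G) < aff_dim F" using face_of_aff_dim_lt[OF facet_convex[OF F] _ ne] by blast
    then have "aff_dim (F \<inter> G) \<le> int CARD('n) - 2" using facet_affdim[OF F] card2 by (simp add: of_nat_diff)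
    then have "zz y (\<epsilon>/2) \<notin> proj CARD('n) ` (F \<inter> G)" using lower_face_avoid[OF g FG] e0 by simp
    then show False using t pt by (metis IntI image_eqI)
  qed
  then have sub: "F \<subseteq> G" by blast
  show "F = G"
  proof (rule ccontr)
    assume ne: "F \<noteq> G"
    have "F face_of G" using face_of_subset[OF facet_of_imp_face_of[OF F] sub facet_of_imp_subset[OF G]] .
    then have "aff_dim F < aff_dim G" using face_of_aff_dim_lt[OF facet_convex[OF G] _ ne] by blast
    then show False using facet_affdim[OF F] facet_affdim[OF G] by simp
  qed
qed

lemma unique_pos:
  assumes g: "good y \<epsilon>" and t: "t \<in> P" "proj CARD('n) t = zz y (\<epsilon>/2)"
    and top: "\<forall>w\<in>P. proj CARD('n) w = proj CARD('n) t \<longrightarrow> w$lc \<le> t$lc"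
    and F: "F facet_of P" "t \<in> F" and G: "G facet_of P" "posf P G" "zz y (\<epsilon>/2) \<in> proj CARD('n) ` G"
  shows "G = F"
proof -
  obtain g where gg: "g \<in> G" "proj CARD('n) g = zz y (\<epsilon>/2)" using G(3) by force
  have gP: "g \<in> P" using gg(1) facet_of_imp_subset[OF G(1)] by blast
  have "t$lc \<le> g$lc" using G(2) t gg unfolding posf_def by auto
  moreover have "g$lc \<le> t$lc" using top gP gg t(2) by auto
  ultimately have "g = t" using proj_lc_eq[of g t] gg t(2) by simp
  then show ?thesis using facets_meet[OF g G(1) F(1) _ F(2) t(2)] gg(1) by blast
qed

lemma unique_neg:
  assumes g: "good y \<epsilon>" and t: "t \<in> P" "proj CARD('n) t = zz y (\<epsilon>/2)"
    and bot: "\<forall>w\<in>P. proj CARD('n) w = proj CARD('n) t \<longrightarrow> t$lc \<le> w$lc"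
    and F: "F facet_of P" "t \<in> F" and G: "G facet_of P" "negf P G" "zz y (\<epsilon>/2) \<in> proj CARD('n) ` G"
  shows "G = F"
proof -
  obtain g where gg: "g \<in> G" "proj CARD('n) g = zz y (\<epsilon>/2)" using G(3) by force
  have gP: "g \<in> P" using gg(1) facet_of_imp_subset[OF G(1)] by blast
  have "g$lc \<le> t$lc" using G(2) t gg unfolding negf_def by auto
  moreover have "t$lc \<le> g$lc" using bot gP gg t(2) by auto
  ultimately have "g = t" using proj_lc_eq[of g t] gg t(2) by simp
  then show ?thesis using facets_meet[OF g G(1) F(1) _ F(2) t(2)] gg(1) by blast
qed

lemma caseA:
  assumes g: "good y \<epsilon>" and y: "y = proj CARD('n) x" and nz: "zz y (\<epsilon>/2) \<notin> proj CARD('n) ` P"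
  shows "x \<notin> Omega CARD('n) P"
proof
  assume "x \<in> Omega CARD('n) P"
  then have "x \<in> P \<and> (\<exists>w\<in>P. proj CARD('n) w = proj CARD('n) x \<and> lastc CARD('n) w < lastc CARD('n) x)"
    using Omega_iff[OF card_ge1 order_refl coordok_d compactP, of x] by blast
  then obtain w where w: "x \<in> P" "w \<in> P" "proj CARD('n) w = proj CARD('n) x" "lastc CARD('n) w < lastc CARD('n) x"
    by blast
  note w = w(1-3) w(4)[unfolded lastc_d]
  define m where "m = (1/2) *\<^sub>R x + (1/2) *\<^sub>R w"
  have mP: "m \<in> P" unfolding m_def using convexD[OF convexP w(1,2)] by simp
  have "proj CARD('n) m = (1/2) *\<^sub>R proj CARD('n) x + (1/2) *\<^sub>R proj CARD('n) w"
    unfolding m_def by (simp add: vec_eq_iff proj_d_nth)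
  also have "\<dots> = proj CARD('n) x" using w(3) by (simp add: scaleR_add_left[symmetric])
  finally have pm: "proj CARD('n) m = y" using y by simp
  have "m \<in> interior P"
  proof (rule ccontr)
    assume "m \<notin> interior P"
    then have "m \<in> rel_frontier P"
      unfolding rel_frontier_def using mP relintP closure_closed compact_imp_closed[OF compactP] by auto
    then obtain F where F: "F facet_of P" "m \<in> F" using rel_frontier_of_polyhedron[OF polyhP] by blast
    obtain a b where r: "isrep P F a b" using facet_rep[OF F(1)] by blast
    have "a \<bullet> m = b" "a \<bullet> x \<le> b" "a \<bullet> w \<le> b" "a$lc \<noteq> 0" using r F(2) w(1,2) unfolding isrep_def by auto
    moreover have "a \<bullet> m = (1/2) * (a \<bullet> x) + (1/2) * (a \<bullet> w)" unfolding m_def by (simp add: inner_add_right)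
    ultimately have "a \<bullet> x - a \<bullet> w = 0" by linarith
    then have "(x$lc - w$lc) * a$lc = 0" using inner_proj_eq[OF w(3)[symmetric], of a] by simp
    then show False using \<open>a$lc \<noteq> 0\<close> w(4) by simp
  qed
  then obtain r where r: "r > 0" "ball m r \<subseteq> P" using mem_interior by blast
  have e0: "\<epsilon> > 0" using g good_def by blast
  define s where "s = min r \<epsilon> / 2"
  have s: "0 < s" "s < r" "s < \<epsilon>" unfolding s_def using r(1) e0 by auto
  have "m - s *\<^sub>R axis mc 1 \<in> ball m r" using s by (simp add: dist_norm)
  then have mm: "m - s *\<^sub>R axis mc 1 \<in> P" using r(2) by blast
  have "proj CARD('n) (m - s *\<^sub>R axis mc 1) = zz y s"
  proof (subst vec_eq_iff, intro allI)
    fix i :: 'n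
    have pi: "proj CARD('n) m $ i = y $ i" using pm by simp
    have yl: "y $ lc = 0" using pm[symmetric] by (simp add: proj_d_nth)
    show "proj CARD('n) (m - s *\<^sub>R axis mc 1) $ i = zz y s $ i"
      using pi yl lc_ne_mc[OF card2] by (cases "i = lc"; cases "i = mc") (auto simp: proj_d_nth zz_nth axis_def)
  qed
  then have "zz y s \<in> proj CARD('n) ` P" using mm by (metis image_eqI)
  moreover have "dich (proj CARD('n) ` P) y \<epsilon>" using g good_def face_of_refl[OF convexP] by blast
  ultimately have "\<forall>s. 0 < s \<and> s < \<epsilon> \<longrightarrow> zz y s \<in> proj CARD('n) ` P" using s unfolding dich_def by blast
  then have "zz y (\<epsilon>/2) \<in> proj CARD('n) ` P" using e0 by simp
  then show False using nz by blast
qed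

end



lemma proj_comb:
  fixes a b :: "real^('n::{finite,linorder})"
  assumes "proj CARD('n) a = y" "proj CARD('n) b = y"
  shows "proj CARD('n) ((1 - u) *\<^sub>R a + u *\<^sub>R b) = y"
proof (subst vec_eq_iff, intro allI)
  fix i :: 'n
  have "proj CARD('n) a $ i = y $ i" "proj CARD('n) b $ i = y $ i" using assms by simp_all
  then show "proj CARD('n) ((1 - u) *\<^sub>R a + u *\<^sub>R b) $ i = y $ i"
    by (cases "i = lc") (auto simp: proj_d_nth algebra_simps)
qed

context gpos
begin

lemma rep_sign_pos: "isrep P F a b \<Longrightarrow> F facet_of P \<Longrightarrow> posf P F \<Longrightarrow> a$lc > 0"
  using rep_negf facet_posneg unfolding isrep_def by (metis linorder_neqE_linordered_idom)

lemma rep_sign_neg: "isrep P F a b \<Longrightarrow> F facet_of P \<Longrightarrow> \<not> posf P F \<Longrightarrow> a$lc < 0"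
  using rep_posf unfolding isrep_def by (metis linorder_neqE_linordered_idom)

lemma aff_cmp:
  assumes r: "isrep P F a b" and g: "g \<in> P" and h: "h \<in> affine hull F"
    and pr: "proj CARD('n) g = proj CARD('n) h"
  shows "(g$lc - h$lc) * a$lc \<le> 0"
proof -
  have "a \<bullet> g \<le> b" "a \<bullet> h = b" using r g h unfolding isrep_def by auto
  then show ?thesis using inner_proj_eq[OF pr, of a] by simp
qed

lemma aff_eq:
  assumes r: "isrep P F a b" and g: "g \<in> affine hull F" and h: "h \<in> affine hull F"
    and pr: "proj CARD('n) g = proj CARD('n) h"
  shows "g = h"
proof -
  have "a \<bullet> g = b" "a \<bullet> h = b" "a$lc \<noteq> 0" using r g h unfolding isrep_def by auto
  then have "g$lc = h$lc" using inner_proj_eq[OF pr, of a] by simp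
  then show ?thesis using proj_lc_eq[OF pr] by simp
qed

lemma rhoQ:
  assumes F: "F facet_of P" and Fk: "Fk facet_of P" and rk: "isrep P Fk ak bk"
    and gF: "gF \<in> F" "proj CARD('n) gF = y" and h: "h \<in> affine hull Fk" "proj CARD('n) h = y"
    and px: "proj CARD('n) x = y"
  defines "Q \<equiv> convex hull (F \<union> (proj CARD('n) -` (proj CARD('n) ` F) \<inter> affine hull Fk))"
  shows "x \<in> Q \<and> x \<noteq> nb CARD('n) Q y \<longleftrightarrow> min (gF$lc) (h$lc) < x$lc \<and> x$lc \<le> max (gF$lc) (h$lc)"
proof -
  obtain aF bF where rF: "isrep P F aF bF" using facet_rep[OF F] by blast
  have aF0: "aF$lc \<noteq> 0" and FP: "F \<subseteq> P" and Fe: "F = P \<inter> {x. aF \<bullet> x = bF}"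
    using rF facet_of_imp_subset[OF F] unfolding isrep_def by auto
  have ak0: "ak$lc \<noteq> 0" and Pk: "P \<subseteq> {x. ak \<bullet> x \<le> bk}" and affk: "affine hull Fk = {x. ak \<bullet> x = bk}"
    using rk unfolding isrep_def by auto
  define F' where "F' = proj CARD('n) -` (proj CARD('n) ` F) \<inter> affine hull Fk"
  define c where "c = ak$lc * aF$lc"
  define H where "H = {w. ak \<bullet> w \<le> bk} \<inter> {w. c * bF \<le> (c *\<^sub>R aF) \<bullet> w}"
  have cvH: "convex H" unfolding H_def
    by (intro convex_Int convex_halfspace_le convex_halfspace_ge)
  have FH: "F \<subseteq> H"
  proof
    fix w assume w: "w \<in> F"
    then have "ak \<bullet> w \<le> bk" using FP Pk by auto
    moreover have "aF \<bullet> w = bF" using w Fe by auto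
    ultimately show "w \<in> H" unfolding H_def by simp
  qed
  have F'H: "F' \<subseteq> H"
  proof
    fix w assume w: "w \<in> F'"
    then obtain f where f: "f \<in> F" "proj CARD('n) f = proj CARD('n) w" unfolding F'_def by force
    have wk: "ak \<bullet> w = bk" using w affk unfolding F'_def by auto
    define D where "D = w$lc - f$lc"
    have "(f$lc - w$lc) * ak$lc \<le> 0" using aff_cmp[OF rk _ _ f(2)] f(1) FP w unfolding F'_def by auto
    then have D0: "ak$lc * D \<ge> 0" unfolding D_def by (simp add: algebra_simps)
    have "aF \<bullet> w - aF \<bullet> f = D * aF$lc" unfolding D_def using inner_proj_eq[OF f(2)[symmetric], of aF] .
    moreover have "aF \<bullet> f = bF" using f(1) Fe by auto
    ultimately have "c * ((aF \<bullet> w) - bF) = (ak$lc * D) * (aF$lc * aF$lc)" unfolding c_def by (simp add: algebra_simps)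
    also have "\<dots> \<ge> 0" using D0 by simp
    finally have "c * bF \<le> (c *\<^sub>R aF) \<bullet> w" by (simp add: algebra_simps)
    then show "w \<in> H" unfolding H_def using wk by simp
  qed
  have QH: "Q \<subseteq> H" unfolding Q_def by (rule hull_minimal) (use FH F'H cvH in \<open>auto simp: F'_def\<close>)
  have cvQ: "convex Q" unfolding Q_def by simp
  have gQ: "gF \<in> Q" unfolding Q_def by (rule hull_inc) (use gF(1) in blast)
  have "proj CARD('n) h \<in> proj CARD('n) ` F" using rev_image_eqI[OF gF(1), of "proj CARD('n) h" "proj CARD('n)"] gF(2) h(2) by simp
  then have hF': "h \<in> F'" unfolding F'_def using h(1) by simp
  have hQ: "h \<in> Q" unfolding Q_def by (rule hull_inc) (use hF' in \<open>simp add: F'_def\<close>)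
  define lo where "lo = min (gF$lc) (h$lc)"
  define hi where "hi = max (gF$lc) (h$lc)"
  have fib: "w \<in> Q \<longleftrightarrow> lo \<le> w$lc \<and> w$lc \<le> hi" if pw: "proj CARD('n) w = y" for w
  proof
    assume "w \<in> Q"
    then have wH: "w \<in> H" using QH by blast
    have "ak \<bullet> w \<le> bk" using wH H_def by simp
    moreover have "ak \<bullet> h = bk" using h affk by simp
    ultimately have "(w$lc - h$lc) * ak$lc \<le> 0" using inner_proj_eq[of w h ak] pw h(2) by simp
    moreover have "c * bF \<le> c * (aF \<bullet> w)" using wH H_def by simp
    moreover have "aF \<bullet> gF = bF" using gF Fe by auto
    moreover have "aF \<bullet> w - aF \<bullet> gF = (w$lc - gF$lc) * aF$lc" using inner_proj_eq[of w gF aF] pw gF(2) by simp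
    ultimately have A: "(w$lc - h$lc) * ak$lc \<le> 0" and B0: "c * bF \<le> c * (aF \<bullet> w)"
      and E: "aF \<bullet> w - bF = (w$lc - gF$lc) * aF$lc"
      by simp_all
    have B0: "c * (aF \<bullet> w - bF) \<ge> 0" using B0 by (simp add: right_diff_distrib)
    have "c * (aF \<bullet> w - bF) = (ak$lc * (w$lc - gF$lc)) * (aF$lc * aF$lc)"
      unfolding c_def E by (simp add: algebra_simps)
    then have B: "(ak$lc * (w$lc - gF$lc)) * (aF$lc * aF$lc) \<ge> 0" using B0 by simp
    have "aF$lc * aF$lc > 0" using aF0 by (auto simp: zero_less_mult_iff linorder_neq_iff)
    then have B': "ak$lc * (w$lc - gF$lc) \<ge> 0" using B by (simp add: zero_le_mult_iff)
    show "lo \<le> w$lc \<and> w$lc \<le> hi"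
    proof (cases "ak$lc > 0")
      case True
      then have "w$lc \<le> h$lc" "gF$lc \<le> w$lc" using A B' by (simp_all add: mult_le_0_iff zero_le_mult_iff)
      then show ?thesis unfolding lo_def hi_def by simp
    next
      case False
      then have "ak$lc < 0" using ak0 by simp
      then have "h$lc \<le> w$lc" "w$lc \<le> gF$lc" using A B' by (simp_all add: mult_le_0_iff zero_le_mult_iff)
      then show ?thesis unfolding lo_def hi_def by simp
    qed
  next
    assume a: "lo \<le> w$lc \<and> w$lc \<le> hi"
    show "w \<in> Q"
    proof (cases "gF$lc = h$lc")
      case True
      then have "w$lc = gF$lc" using a unfolding lo_def hi_def by simp
      then have "w = gF" using proj_lc_eq[of w gF] pw gF(2) by simp
      then show ?thesis using gQ by simp
    next
      case False
      define u where "u = (w$lc - gF$lc) / (h$lc - gF$lc)"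
      have u: "0 \<le> u \<and> u \<le> 1"
      proof (cases "gF$lc < h$lc")
        case True
        then have "gF$lc \<le> w$lc" "w$lc \<le> h$lc" using a unfolding lo_def hi_def by auto
        then show ?thesis unfolding u_def using True by (simp add: divide_simps)
      next
        case False2: False
        then have lt: "h$lc < gF$lc" using False by simp
        then have "h$lc \<le> w$lc" "w$lc \<le> gF$lc" using a unfolding lo_def hi_def by auto
        then show ?thesis unfolding u_def using lt by (simp add: divide_simps)
      qed
      have "(1 - u) *\<^sub>R gF + u *\<^sub>R h = w"
      proof (rule proj_lc_eq)
        show "proj CARD('n) ((1 - u) *\<^sub>R gF + u *\<^sub>R h) = proj CARD('n) w"
          using proj_comb[OF gF(2) h(2)] pw by simp
        have "(1 - u) * gF$lc + u * h$lc = gF$lc + u * (h$lc - gF$lc)" by (simp add: algebra_simps)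
        also have "\<dots> = w$lc" unfolding u_def using False by simp
        finally show "((1 - u) *\<^sub>R gF + u *\<^sub>R h) $ lc = w $ lc" by simp
      qed
      then show ?thesis using convexD[OF cvQ gQ hQ, of "1 - u" u] u by simp
    qed
  qed
  define p where "p = (if gF$lc \<le> h$lc then gF else h)"
  have pQ: "p \<in> Q" and pp: "proj CARD('n) p = y" and plc: "p$lc = lo"
    unfolding p_def lo_def using gQ hQ gF h by auto
  have "nb CARD('n) Q y = p"
  proof (rule nb_eq[OF card_ge1 order_refl coordok_d pQ pp])
    show "\<forall>w\<in>Q. proj CARD('n) w = y \<longrightarrow> lastc CARD('n) p \<le> lastc CARD('n) w"
      using fib plc by (auto simp: lastc_d)
  qed
  moreover have "x = p \<longleftrightarrow> x$lc = lo" using proj_lc_eq[of x p] px pp plc by auto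
  ultimately show ?thesis using fib[OF px] unfolding lo_def[symmetric] hi_def[symmetric] by auto
qed

end



context gpos
begin

lemma proj_idem: "proj CARD('n) (proj CARD('n) (x::(real,'n) vec)) = proj CARD('n) x"
  by (simp add: vec_eq_iff proj_d_nth)

lemma main_point:
  assumes Fk: "Fk facet_of P"
  shows "indicator (Omega CARD('n) P) x =
      - facet_sign P Fk *
        (\<Sum>F \<in> {F. F facet_of P \<and> F \<noteq> Fk}.
           facet_sign P F *
           indicator
             (rho_plus_set CARD('n) (Omega (CARD('n) - 1) (proj CARD('n) ` F))
                (convex hull (F \<union> (proj CARD('n) -` (proj CARD('n) ` F) \<inter> affine hull Fk))))
             x)"
proof -
  define y where "y = proj CARD('n) x"
  have yl: "y $ lc = 0" unfolding y_def by (simp add: proj_d_nth)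
  obtain \<epsilon> where g: "good y \<epsilon>" using good_exists by blast
  have e0: "\<epsilon> > 0" using g good_def by blast
  define z0 where "z0 = zz y (\<epsilon>/2)"
  define S where "S = {F. F facet_of P \<and> F \<noteq> Fk}"
  define Q where "Q F = convex hull (F \<union> (proj CARD('n) -` (proj CARD('n) ` F) \<inter> affine hull Fk))" for F
  define trm where "trm F = facet_sign P F *
           indicator (rho_plus_set CARD('n) (Omega (CARD('n) - 1) (proj CARD('n) ` F)) (Q F)) x" for F
  have "S \<subseteq> {F. F face_of P}" unfolding S_def using facet_of_imp_face_of by blast
  then have finS: "finite S" using finite_subset finite_polytope_faces[OF polyP] by blast
  have rho_iff: "x \<in> rho_plus_set CARD('n) (Omega (CARD('n) - 1) (proj CARD('n) ` F)) (Q F) \<longleftrightarrow>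
      y \<in> Omega (CARD('n) - 1) (proj CARD('n) ` F) \<and> x \<in> Q F \<and> x \<noteq> nb CARD('n) (Q F) y" for F
    by (simp add: rho_plus_set_iff y_def)
  have zero: "trm F = 0" if F: "F facet_of P" and nz: "z0 \<notin> proj CARD('n) ` F" for F
  proof -
    have "y \<notin> Omega (CARD('n) - 1) (proj CARD('n) ` F)"
      using Omega1_act[OF g facet_of_imp_face_of[OF F] yl] nz z0_def by simp
    then show ?thesis unfolding trm_def using rho_iff by (simp add: indicator_def)
  qed
  have goal_eq: "?thesis \<longleftrightarrow> indicator (Omega CARD('n) P) x = - facet_sign P Fk * (\<Sum>F\<in>S. trm F)"
    unfolding trm_def S_def Q_def by (rule refl)
  show ?thesis
  proof (cases "z0 \<in> proj CARD('n) ` P")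
    case False
    have "trm F = 0" if "F \<in> S" for F
    proof (rule zero)
      show F: "F facet_of P" using that S_def by blast
      show "z0 \<notin> proj CARD('n) ` F" using False facet_of_imp_subset[OF F] by blast
    qed
    then have "(\<Sum>F\<in>S. trm F) = 0" by simp
    moreover have "x \<notin> Omega CARD('n) P" using caseA[OF g y_def] False z0_def by simp
    ultimately show ?thesis using goal_eq by simp
  next
    case True
    obtain t0 where t0: "t0 \<in> P" "proj CARD('n) t0 = z0"
        "\<forall>w\<in>P. proj CARD('n) w = z0 \<longrightarrow> lastc CARD('n) w \<le> lastc CARD('n) t0"
      using fiber_max[OF compactP True] by blast
    obtain b0 where b0: "b0 \<in> P" "proj CARD('n) b0 = z0"
        "\<forall>w\<in>P. proj CARD('n) w = z0 \<longrightarrow> lastc CARD('n) b0 \<le> lastc CARD('n) w"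
      using fiber_min[OF compactP True] by blast
    have topt: "\<forall>w\<in>P. proj CARD('n) w = proj CARD('n) t0 \<longrightarrow> w$lc \<le> t0$lc" using t0 by (simp add: lastc_d)
    have botb: "\<forall>w\<in>P. proj CARD('n) w = proj CARD('n) b0 \<longrightarrow> b0$lc \<le> w$lc" using b0 by (simp add: lastc_d)
    obtain Fp where Fp: "Fp facet_of P" "posf P Fp" "t0 \<in> Fp"
      using top_facet[OF g t0(1) t0(2)[unfolded z0_def] topt] by blast
    obtain Fm where Fm: "Fm facet_of P" "negf P Fm" "b0 \<in> Fm"
      using bot_facet[OF g b0(1) b0(2)[unfolded z0_def] botb] by blast
    have Fpn: "\<not> negf P Fp" using facet_posneg[OF Fp(1)] Fp(2) by blast
    have Fmp: "\<not> posf P Fm" using facet_posneg[OF Fm(1)] Fm(2) by blast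
    have pm: "Fp \<noteq> Fm" using Fp(2) Fmp by blast
    have act: "F = Fp \<or> F = Fm" if F: "F facet_of P" and zF: "z0 \<in> proj CARD('n) ` F" for F
    proof (cases "posf P F")
      case True
      have "zz y (\<epsilon>/2) \<in> proj CARD('n) ` F" using zF unfolding z0_def .
      then show ?thesis using unique_pos[OF g t0(1) t0(2)[unfolded z0_def] topt Fp(1,3) F True] by simp
    next
      case False
      then have "negf P F" using facet_posneg[OF F] by blast
      moreover have "zz y (\<epsilon>/2) \<in> proj CARD('n) ` F" using zF unfolding z0_def .
      ultimately show ?thesis using unique_neg[OF g b0(1) b0(2)[unfolded z0_def] botb Fm(1,3) F] by simp
    qed
    have zFp: "z0 \<in> proj CARD('n) ` Fp" using Fp(3) t0(2) by (metis image_eqI)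
    have zFm: "z0 \<in> proj CARD('n) ` Fm" using Fm(3) b0(2) by (metis image_eqI)
    have OFp: "y \<in> Omega (CARD('n) - 1) (proj CARD('n) ` Fp)"
      using Omega1_act[OF g facet_of_imp_face_of[OF Fp(1)] yl] zFp z0_def by simp
    have OFm: "y \<in> Omega (CARD('n) - 1) (proj CARD('n) ` Fm)"
      using Omega1_act[OF g facet_of_imp_face_of[OF Fm(1)] yl] zFm z0_def by simp
    obtain gp where gp: "gp \<in> Fp" "proj CARD('n) gp = y" using OFp unfolding Omega_def by auto
    obtain gm where gm: "gm \<in> Fm" "proj CARD('n) gm = y" using OFm unfolding Omega_def by auto
    have gpP: "gp \<in> P" using gp(1) facet_of_imp_subset[OF Fp(1)] by blast
    have gmP: "gm \<in> P" using gm(1) facet_of_imp_subset[OF Fm(1)] by blast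
    have gmgp: "gm$lc \<le> gp$lc" using Fp(2) gmP gp gm unfolding posf_def by auto
    have LHS: "x \<in> Omega CARD('n) P \<longleftrightarrow> gm$lc < x$lc \<and> x$lc \<le> gp$lc"
    proof
      assume "x \<in> Omega CARD('n) P"
      then have "x \<in> P \<and> (\<exists>w\<in>P. proj CARD('n) w = proj CARD('n) x \<and> lastc CARD('n) w < lastc CARD('n) x)"
        using Omega_iff[OF card_ge1 order_refl coordok_d compactP, of x] by blast
      then obtain w where w: "x \<in> P" "w \<in> P" "proj CARD('n) w = y" "w$lc < x$lc"
        using y_def by (auto simp: lastc_d)
      have "x$lc \<le> gp$lc" using Fp(2) w(1) gp y_def unfolding posf_def by auto
      moreover have "gm$lc \<le> w$lc" using Fm(2) w(2,3) gm unfolding negf_def by auto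
      ultimately show "gm$lc < x$lc \<and> x$lc \<le> gp$lc" using w(4) by simp
    next
      assume a: "gm$lc < x$lc \<and> x$lc \<le> gp$lc"
      define u where "u = (x$lc - gm$lc) / (gp$lc - gm$lc)"
      have u: "0 \<le> u" "u \<le> 1" unfolding u_def using a by (auto simp: divide_simps)
      have "(1 - u) *\<^sub>R gm + u *\<^sub>R gp = x"
      proof (rule proj_lc_eq)
        show "proj CARD('n) ((1 - u) *\<^sub>R gm + u *\<^sub>R gp) = proj CARD('n) x"
          using proj_comb[OF gm(2) gp(2)] y_def by simp
        have "(1 - u) * gm$lc + u * gp$lc = gm$lc + u * (gp$lc - gm$lc)" by (simp add: algebra_simps)
        also have "\<dots> = x$lc" unfolding u_def using a by simp
        finally show "((1 - u) *\<^sub>R gm + u *\<^sub>R gp) $ lc = x $ lc" by simp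
      qed
      then have xP: "x \<in> P" using convexD[OF convexP gmP gpP, of "1 - u" u] u by simp
      have "lastc CARD('n) gm < lastc CARD('n) x" using a by (simp add: lastc_d)
      then show "x \<in> Omega CARD('n) P"
        using Omega_iff[OF card_ge1 order_refl coordok_d compactP, of x] xP gmP gm(2) y_def by blast
    qed
    obtain ak bk where rk: "isrep P Fk ak bk" using facet_rep[OF Fk] by blast
    have ak0: "ak$lc \<noteq> 0" and affk: "affine hull Fk = {w. ak \<bullet> w = bk}" using rk unfolding isrep_def by auto
    define h where "h = y + ((bk - ak \<bullet> y) / ak$lc) *\<^sub>R axis lc 1"
    have hA: "h \<in> affine hull Fk" unfolding affk h_def using ak0
      by (simp add: inner_add_right inner_axis)
    have ph: "proj CARD('n) h = y" unfolding h_def y_def by (simp add: proj_add_axis proj_idem)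
    have tFp: "trm Fp = (if min (gp$lc) (h$lc) < x$lc \<and> x$lc \<le> max (gp$lc) (h$lc) then 1 else 0)"
    proof -
      have "x \<in> rho_plus_set CARD('n) (Omega (CARD('n) - 1) (proj CARD('n) ` Fp)) (Q Fp) \<longleftrightarrow>
            min (gp$lc) (h$lc) < x$lc \<and> x$lc \<le> max (gp$lc) (h$lc)"
        using rho_iff[of Fp] OFp rhoQ[OF Fp(1) Fk rk gp hA ph y_def[symmetric]] unfolding Q_def by simp
      then show ?thesis unfolding trm_def using facet_sign_eq[OF Fp(1)] Fp(2) by (simp add: indicator_def)
    qed
    have tFm: "trm Fm = - (if min (gm$lc) (h$lc) < x$lc \<and> x$lc \<le> max (gm$lc) (h$lc) then 1 else 0)"
    proof -
      have "x \<in> rho_plus_set CARD('n) (Omega (CARD('n) - 1) (proj CARD('n) ` Fm)) (Q Fm) \<longleftrightarrow>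
            min (gm$lc) (h$lc) < x$lc \<and> x$lc \<le> max (gm$lc) (h$lc)"
        using rho_iff[of Fm] OFm rhoQ[OF Fm(1) Fk rk gm hA ph y_def[symmetric]] unfolding Q_def by simp
      then show ?thesis unfolding trm_def using facet_sign_eq[OF Fm(1)] Fmp by (simp add: indicator_def)
    qed
    have sumS: "(\<Sum>F\<in>S. trm F) = (\<Sum>F\<in>S \<inter> {Fp, Fm}. trm F)"
    proof (rule sum.mono_neutral_right[OF finS])
      show "S \<inter> {Fp, Fm} \<subseteq> S" by blast
      show "\<forall>i\<in>S - S \<inter> {Fp, Fm}. trm i = 0"
      proof
        fix F assume F: "F \<in> S - S \<inter> {Fp, Fm}"
        then have Ff: "F facet_of P" using S_def by blast
        have "z0 \<notin> proj CARD('n) ` F" using act[OF Ff] F by blast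
        then show "trm F = 0" using zero[OF Ff] by blast
      qed
    qed
    have LHSv: "indicator (Omega CARD('n) P) x = (if gm$lc < x$lc \<and> x$lc \<le> gp$lc then 1 else (0::real))"
      using LHS by (simp add: indicator_def)
    have main: "indicator (Omega CARD('n) P) x = - facet_sign P Fk * (\<Sum>F\<in>S. trm F)"
    proof (cases "posf P Fk")
      case True
      have akp: "ak$lc > 0" using rep_sign_pos[OF rk Fk True] .
      have sk: "facet_sign P Fk = 1" using facet_sign_eq[OF Fk] True by simp
      have "(gp$lc - h$lc) * ak$lc \<le> 0" using aff_cmp[OF rk gpP hA] gp(2) ph by simp
      then have gph: "gp$lc \<le> h$lc" using akp by (simp add: mult_le_0_iff)
      have "(gm$lc - h$lc) * ak$lc \<le> 0" using aff_cmp[OF rk gmP hA] gm(2) ph by simp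
      then have gmh: "gm$lc \<le> h$lc" using akp by (simp add: mult_le_0_iff)
      have kFm: "Fk \<noteq> Fm" using True Fmp by blast
      show ?thesis
      proof (cases "Fk = Fp")
        case True
        have "gp \<in> affine hull Fk" by (rule hull_inc) (use gp(1) True in simp)
        then have gph2: "gp = h" using aff_eq[OF rk _ hA] gp(2) ph by simp
        have "S \<inter> {Fp, Fm} = {Fm}" using True kFm Fm(1) unfolding S_def by auto
        then have sv: "(\<Sum>F\<in>S. trm F) = trm Fm" using sumS by simp
        show ?thesis unfolding sv tFm LHSv sk gph2 using gmh by (auto simp: min_def max_def)
      next
        case False
        have "S \<inter> {Fp, Fm} = {Fp, Fm}" using False kFm Fm(1) Fp(1) unfolding S_def by auto
        then have sv: "(\<Sum>F\<in>S. trm F) = trm Fp + trm Fm" using sumS pm by simp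
        show ?thesis unfolding sv tFp tFm LHSv sk using gmgp gmh gph by (auto simp: min_def max_def)
      qed
    next
      case False
      have akn: "ak$lc < 0" using rep_sign_neg[OF rk Fk False] .
      have sk: "facet_sign P Fk = -1" using facet_sign_eq[OF Fk] False by simp
      have "(gp$lc - h$lc) * ak$lc \<le> 0" using aff_cmp[OF rk gpP hA] gp(2) ph by simp
      then have gph: "h$lc \<le> gp$lc" using akn by (simp add: mult_le_0_iff)
      have "(gm$lc - h$lc) * ak$lc \<le> 0" using aff_cmp[OF rk gmP hA] gm(2) ph by simp
      then have gmh: "h$lc \<le> gm$lc" using akn by (simp add: mult_le_0_iff)
      have kFp: "Fk \<noteq> Fp" using False Fp(2) by blast
      show ?thesis
      proof (cases "Fk = Fm")
        case True
        have "gm \<in> affine hull Fk" by (rule hull_inc) (use gm(1) True in simp)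
        then have gmh2: "gm = h" using aff_eq[OF rk _ hA] gm(2) ph by simp
        have "S \<inter> {Fp, Fm} = {Fp}" using True kFp Fp(1) unfolding S_def by auto
        then have sv: "(\<Sum>F\<in>S. trm F) = trm Fp" using sumS by simp
        show ?thesis unfolding sv tFp LHSv sk gmh2 using gph by (auto simp: min_def max_def)
      next
        case False
        have "S \<inter> {Fp, Fm} = {Fp, Fm}" using False kFp Fm(1) Fp(1) unfolding S_def by auto
        then have sv: "(\<Sum>F\<in>S. trm F) = trm Fp + trm Fm" using sumS pm by simp
        show ?thesis unfolding sv tFp tFm LHSv sk using gmgp gmh gph by (auto simp: min_def max_def)
      qed
    qed
    show ?thesis by (rule iffD2[OF goal_eq main])
  qed
qed

end

theorem mainTheorem6:
  fixes P :: "(real^('n::{finite,linorder})) set" and Fk :: "(real^('n::{finite,linorder})) set"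
  assumes "CARD('n) \<ge> 2"
    and "general_position P"
    and "Fk facet_of P"
  shows "\<forall>x :: real^('n::{finite,linorder}).
    indicator (Omega CARD('n) P) x =
      - facet_sign P Fk *
        (\<Sum>F \<in> {F. F facet_of P \<and> F \<noteq> Fk}.
           facet_sign P F *
           indicator
             (rho_plus_set CARD('n) (Omega (CARD('n) - 1) (proj CARD('n) ` F))
                (convex hull (F \<union> (proj CARD('n) -` (proj CARD('n) ` F) \<inter> affine hull Fk))))
             x)"
proof
  fix x :: "(real,'n) vec"
  interpret gpos P using assms(1,2) by unfold_locales
  show "indicator (Omega CARD('n) P) x =
      - facet_sign P Fk *
        (\<Sum>F \<in> {F. F facet_of P \<and> F \<noteq> Fk}.
           facet_sign P F *
           indicator
             (rho_plus_set CARD('n) (Omega (CARD('n) - 1) (proj CARD('n) ` F))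
                (convex hull (F \<union> (proj CARD('n) -` (proj CARD('n) ` F) \<inter> affine hull Fk))))
             x)"
    by (rule main_point[OF assms(3)])
qed


end
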